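(* Assume (H2) and additionally that $g$ is bounded, $\|g\|_\infty:=\sup_y|g(y)|<\infty$. Let $x\in\mathcal C^{p\text{-var}}([a,b],\mathbb R^m)$ and let $y$ be the solution on $[a,b]$ of $y_t=y_a+\int_a^t[Ay_s+f(y_s)]ds+\int_a^tg(y_s)dx_s$. Then $$\|y\|_{p\text{-var},[a,b]}\le\Big[\|y_a\|+\Big(\tfrac{\|f(0)\|}{L}\vee2\|g\|_\infty\Big)\big(1+|||x|||_{p\text{-var},[a,b]}\big)N_{[a,b]}(x)\Big]e^{2L(b-a)}N_{[a,b]}(x)^{\frac{p-1}{p}}.$$
   Context: Fix $d,m\ge1$ and $p\in(1,2)$. For a path $x:[a,b]\to\mathbb R^r$: $|||x|||_{p\text{-var},[a,b]}=\big(\sup_{\Pi}\sum_i\|x_{t_{i+1}}-x_{t_i}\|^p\big)^{1/p}$ over finite partitions of $[a,b]$; $\|x\|_{p\text{-var},[a,b]}=\|x_a\|+|||x|||_{p\text{-var},[a,b]}$. Integrals against $dx$ are Young integrals. $A\in\mathbb R^{d\times d}$ with operator norm $|A|$. (H2): $f:\mathbb R^d\to\mathbb R^d$, $g:\mathbb R^d\to\mathbb R^{d\times m}$ globally Lipschitz with constants $C_f$, $C_g>0$; $g\in C^1$ with $Dg$ globally Lipschitz. $L=|A|+C_f$, $K=(1-2^{1-2/p})^{-1}$, $a\vee b=\max\{a,b\}$. Greedy times: $\gamma=\frac1{2(K+1)C_g}$, $\tau_0=a$, $\tau_{k+1}=\inf\{t>\tau_k:|||x|||_{p\text{-var},[\tau_k,t]}=\gamma\}\wedge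 b$, $N_{[a,b]}(x)=\min\{k\ge1:\tau_k=b\}$. *)

theory Defs
  imports "HOL-Analysis.Analysis"
begin

definition partition_of :: "real \<Rightarrow> real \<Rightarrow> nat \<Rightarrow> (nat \<Rightarrow> real) \<Rightarrow> bool" where
  "partition_of a b n t \<longleftrightarrow> t 0 = a \<and> t n = b \<and> (\<forall>i<n. t i < t (Suc i))"

definition pvar_sum :: "real \<Rightarrow> (real \<Rightarrow> 'a::real_normed_vector) \<Rightarrow> nat \<Rightarrow> (nat \<Rightarrow> real) \<Rightarrow> real" where
  "pvar_sum p x n t = (\<Sum>i<n. norm (x (t (Suc i)) - x (t i)) powr p)"

definition finite_pvar :: "real \<Rightarrow> (real \<Rightarrow> 'a::real_normed_vector) \<Rightarrow> real \<Rightarrow> real \<Rightarrow> bool" where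
  "finite_pvar p x a b \<longleftrightarrow> bdd_above {pvar_sum p x n t | n t. partition_of a b n t}"

definition pvar_semi :: "real \<Rightarrow> (real \<Rightarrow> 'a::real_normed_vector) \<Rightarrow> real \<Rightarrow> real \<Rightarrow> real" where
  "pvar_semi p x a b = (Sup {pvar_sum p x n t | n t. partition_of a b n t}) powr (1 / p)"

definition pvar_norm :: "real \<Rightarrow> (real \<Rightarrow> 'a::real_normed_vector) \<Rightarrow> real \<Rightarrow> real \<Rightarrow> real" where
  "pvar_norm p x a b = norm (x a) + pvar_semi p x a b"

definition has_young_integral ::
  "(real \<Rightarrow> real^'m^'d) \<Rightarrow> (real \<Rightarrow> real^'m) \<Rightarrow> real \<Rightarrow> real \<Rightarrow> real^'d \<Rightarrow> bool" where
  "has_young_integral F x s t I \<longleftrightarrow>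
     (\<forall>e>0. \<exists>\<delta>>0. \<forall>n \<tau> \<xi>. partition_of s t n \<tau>
        \<and> (\<forall>i<n. \<tau> i \<le> \<xi> i \<and> \<xi> i \<le> \<tau> (Suc i))
        \<and> (\<forall>i<n. \<tau> (Suc i) - \<tau> i < \<delta>)
        \<longrightarrow> norm ((\<Sum>i<n. F (\<xi> i) *v (x (\<tau> (Suc i)) - x (\<tau> i))) - I) < e)"

text \<open>Greedy times: tau 0 = a, tau (k+1) = inf{t > tau k : |||x|||_{[tau k, t]} = gamma} min b,
  with inf of the empty set = +infinity (so the value is b).\<close>
fun greedy_tau :: "real \<Rightarrow> (real \<Rightarrow> 'a::real_normed_vector) \<Rightarrow> real \<Rightarrow> real \<Rightarrow> real \<Rightarrow> nat \<Rightarrow> real" where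
  "greedy_tau p x a b \<gamma> 0 = a"
| "greedy_tau p x a b \<gamma> (Suc k) =
     (let s = greedy_tau p x a b \<gamma> k;
          S = {t. s < t \<and> t \<le> b \<and> pvar_semi p x s t = \<gamma>}
      in if S = {} then b else min (Inf S) b)"

definition greedy_N :: "real \<Rightarrow> (real \<Rightarrow> 'a::real_normed_vector) \<Rightarrow> real \<Rightarrow> real \<Rightarrow> real \<Rightarrow> nat" where
  "greedy_N p x a b \<gamma> = (LEAST k. 1 \<le> k \<and> greedy_tau p x a b \<gamma> k = b)"

definition K_const :: "real \<Rightarrow> real" where
  "K_const p = 1 / (1 - 2 powr (1 - 2 / p))"

end

theory Submission
  imports Defs
begin


definition psum :: "(real \<Rightarrow> real \<Rightarrow> 'a::comm_monoid_add) \<Rightarrow> nat \<Rightarrow> (nat \<Rightarrow> real) \<Rightarrow> 'a" where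
  "psum \<phi> n \<tau> = (\<Sum>i<n. \<phi> (\<tau> i) (\<tau> (Suc i)))"

definition cat :: "nat \<Rightarrow> (nat \<Rightarrow> real) \<Rightarrow> (nat \<Rightarrow> real) \<Rightarrow> nat \<Rightarrow> real" where
  "cat n1 \<tau>1 \<tau>2 = (\<lambda>i. if i \<le> n1 then \<tau>1 i else \<tau>2 (i - n1))"

lemma pvar_sum_psum: "pvar_sum p x n \<tau> = psum (\<lambda>u v. norm (x v - x u) powr p) n \<tau>"
  by (simp add: pvar_sum_def psum_def)

lemma part_mono_strict:
  assumes "partition_of s t n \<tau>" "i < j" "j \<le> n"
  shows "\<tau> i < \<tau> j"
  using assms(2,3)
proof (induction j)
  case 0 then show ?case by simp
next
  case (Suc j)
  have st: "\<tau> j < \<tau> (Suc j)" using assms(1) Suc.prems by (simp add: partition_of_def)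
  show ?case
  proof (cases "i = j")
    case True then show ?thesis using st by simp
  next
    case False then have "i < j" using Suc.prems by simp
    then show ?thesis using Suc.IH Suc.prems st by simp
  qed
qed

lemma part_mono:
  assumes "partition_of s t n \<tau>" "i \<le> j" "j \<le> n"
  shows "\<tau> i \<le> \<tau> j"
  using part_mono_strict[OF assms(1), of i j] assms by (cases "i = j") auto

lemma part_range:
  assumes "partition_of s t n \<tau>" "i \<le> n"
  shows "s \<le> \<tau> i" "\<tau> i \<le> t"
  using part_mono[OF assms(1), of 0 i] part_mono[OF assms(1), of i n] assms
  by (auto simp: partition_of_def)

lemma part_le: "partition_of s t n \<tau> \<Longrightarrow> s \<le> t"
  using part_range[of s t n \<tau> 0] by (auto simp: partition_of_def)

lemma part_eq_zero: "partition_of s s n \<tau> \<Longrightarrow> n = 0"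
  apply (rule ccontr)
  using part_mono_strict[of s s n \<tau> 0 n] by (auto simp: partition_of_def)

lemma part_pos: "partition_of s t n \<tau> \<Longrightarrow> s < t \<Longrightarrow> 0 < n"
  by (cases n) (auto simp: partition_of_def)

lemma part_refl: "partition_of s s 0 (\<lambda>_. s)"
  by (simp add: partition_of_def)

lemma part_triv: "s < t \<Longrightarrow> partition_of s t 1 (\<lambda>i. if i = 0 then s else t)"
  by (simp add: partition_of_def)

lemma part_cat:
  assumes "partition_of s u n1 \<tau>1" "partition_of u t n2 \<tau>2"
  shows "partition_of s t (n1 + n2) (cat n1 \<tau>1 \<tau>2)"
  unfolding partition_of_def
proof (intro conjI allI impI)
  show "cat n1 \<tau>1 \<tau>2 0 = s" using assms by (simp add: cat_def partition_of_def)
  show "cat n1 \<tau>1 \<tau>2 (n1 + n2) = t" using assms by (auto simp: cat_def partition_of_def)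
  fix i assume i: "i < n1 + n2"
  show "cat n1 \<tau>1 \<tau>2 i < cat n1 \<tau>1 \<tau>2 (Suc i)"
  proof (cases "i < n1")
    case True then show ?thesis using assms(1) by (simp add: cat_def partition_of_def)
  next
    case False
    show ?thesis
    proof (cases "i = n1")
      case True
      then show ?thesis using assms i by (auto simp: cat_def partition_of_def)
    next
      case False
      then have "i > n1" using \<open>\<not> i < n1\<close> by simp
      then have "Suc i - n1 = Suc (i - n1)" "i - n1 < n2" using i by auto
      then show ?thesis using assms \<open>i > n1\<close> by (auto simp: cat_def partition_of_def)
    qed
  qed
qed

lemma sum_lessThan_add: "(\<Sum>i<m + (n::nat). f i) = (\<Sum>i<m. f i) + (\<Sum>i<n. f (m + i))"
  by (induction n) (auto simp: add.assoc)

lemma psum_cat: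
  assumes "\<tau>1 n1 = \<tau>2 0"
  shows "psum \<phi> (n1 + n2) (cat n1 \<tau>1 \<tau>2) = psum \<phi> n1 \<tau>1 + psum \<phi> n2 \<tau>2"
proof -
  have "psum \<phi> (n1 + n2) (cat n1 \<tau>1 \<tau>2)
      = (\<Sum>i<n1. \<phi> (cat n1 \<tau>1 \<tau>2 i) (cat n1 \<tau>1 \<tau>2 (Suc i)))
        + (\<Sum>i<n2. \<phi> (cat n1 \<tau>1 \<tau>2 (n1 + i)) (cat n1 \<tau>1 \<tau>2 (Suc (n1 + i))))"
    unfolding psum_def by (simp add: sum_lessThan_add)
  also have "(\<Sum>i<n1. \<phi> (cat n1 \<tau>1 \<tau>2 i) (cat n1 \<tau>1 \<tau>2 (Suc i))) = psum \<phi> n1 \<tau>1"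
    unfolding psum_def by (intro sum.cong) (auto simp: cat_def)
  also have "(\<Sum>i<n2. \<phi> (cat n1 \<tau>1 \<tau>2 (n1 + i)) (cat n1 \<tau>1 \<tau>2 (Suc (n1 + i)))) = psum \<phi> n2 \<tau>2"
    unfolding psum_def using assms by (intro sum.cong) (auto simp: cat_def Suc_diff_le)
  finally show ?thesis .
qed




definition om :: "real \<Rightarrow> (real \<Rightarrow> 'a::real_normed_vector) \<Rightarrow> real \<Rightarrow> real \<Rightarrow> real" where
  "om p x s t = Sup {pvar_sum p x n \<tau> | n \<tau>. partition_of s t n \<tau>}"

lemma pvar_semi_om: "pvar_semi p x s t = om p x s t powr (1/p)"
  by (simp add: pvar_semi_def om_def)

lemma part_exists: "s \<le> t \<Longrightarrow> \<exists>n \<tau>. partition_of s t n \<tau>"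
  using part_refl[of s] part_triv[of s t] by (cases "s = t") auto

lemma psum_nonneg: "(\<And>u v. 0 \<le> (\<phi> u v::real)) \<Longrightarrow> 0 \<le> psum \<phi> n \<tau>"
  unfolding psum_def by (simp add: sum_nonneg)

lemma psum_ext:
  fixes \<phi> :: "real \<Rightarrow> real \<Rightarrow> real"
  assumes nn: "\<And>u v. 0 \<le> \<phi> u v" and P: "partition_of s t n \<tau>" and "a \<le> s" "t \<le> b"
  shows "\<exists>m \<sigma>. partition_of a b m \<sigma> \<and> psum \<phi> n \<tau> \<le> psum \<phi> m \<sigma>"
proof -
  obtain m1 \<sigma>1 where P1: "partition_of a t m1 \<sigma>1" and S1: "psum \<phi> n \<tau> \<le> psum \<phi> m1 \<sigma>1"
  proof (cases "a = s")
    case True then show ?thesis using that P by auto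
  next
    case False
    then have "a < s" using assms by simp
    have Pt: "partition_of a s 1 (\<lambda>i. if i = 0 then a else s)" using part_triv[OF \<open>a < s\<close>] .
    have "partition_of a t (1 + n) (cat 1 (\<lambda>i. if i = 0 then a else s) \<tau>)"
      using part_cat[OF Pt P] .
    moreover have "psum \<phi> (1 + n) (cat 1 (\<lambda>i. if i = 0 then a else s) \<tau>)
        = psum \<phi> 1 (\<lambda>i. if i = 0 then a else s) + psum \<phi> n \<tau>"
      by (rule psum_cat) (use P in \<open>simp add: partition_of_def\<close>)
    moreover have "0 \<le> psum \<phi> 1 (\<lambda>i. if i = 0 then a else s)" by (rule psum_nonneg[OF nn])
    ultimately show ?thesis using that by fastforce
  qed
  show ?thesis
  proof (cases "t = b")
    case True then show ?thesis using P1 S1 by auto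
  next
    case False
    then have "t < b" using assms by simp
    have Pt: "partition_of t b 1 (\<lambda>i. if i = 0 then t else b)" using part_triv[OF \<open>t < b\<close>] .
    have "partition_of a b (m1 + 1) (cat m1 \<sigma>1 (\<lambda>i. if i = 0 then t else b))"
      using part_cat[OF P1 Pt] .
    moreover have "psum \<phi> (m1 + 1) (cat m1 \<sigma>1 (\<lambda>i. if i = 0 then t else b))
        = psum \<phi> m1 \<sigma>1 + psum \<phi> 1 (\<lambda>i. if i = 0 then t else b)"
      by (rule psum_cat) (use P1 in \<open>simp add: partition_of_def\<close>)
    moreover have "0 \<le> psum \<phi> 1 (\<lambda>i. if i = 0 then t else b)" by (rule psum_nonneg[OF nn])
    ultimately show ?thesis using S1 by fastforce
  qed
qed

lemma pvar_sum_nonneg: "0 \<le> pvar_sum p x n \<tau>"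
  unfolding pvar_sum_def by (simp add: sum_nonneg)

lemma pvar_sum_ext:
  assumes "partition_of s t n \<tau>" "a \<le> s" "t \<le> b"
  shows "\<exists>m \<sigma>. partition_of a b m \<sigma> \<and> pvar_sum p x n \<tau> \<le> pvar_sum p x m \<sigma>"
  using psum_ext[OF _ assms, of "\<lambda>u v. norm (x v - x u) powr p"] unfolding pvar_sum_psum by auto

lemma finite_pvar_sub:
  assumes "finite_pvar p x a b" "a \<le> s" "t \<le> b"
  shows "finite_pvar p x s t"
proof -
  obtain M where M: "\<And>z. z \<in> {pvar_sum p x n \<tau> | n \<tau>. partition_of a b n \<tau>} \<Longrightarrow> z \<le> M"
    using assms(1) unfolding finite_pvar_def bdd_above_def by blast
  show ?thesis unfolding finite_pvar_def bdd_above_def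
  proof (intro exI ballI)
    fix z assume "z \<in> {pvar_sum p x n \<tau> | n \<tau>. partition_of s t n \<tau>}"
    then obtain n \<tau> where "z = pvar_sum p x n \<tau>" "partition_of s t n \<tau>" by auto
    then obtain m \<sigma> where "partition_of a b m \<sigma>" "z \<le> pvar_sum p x m \<sigma>"
      using pvar_sum_ext assms by blast
    then show "z \<le> M" using M by fastforce
  qed
qed

lemma om_upper:
  assumes "finite_pvar p x s t" "partition_of s t n \<tau>"
  shows "pvar_sum p x n \<tau> \<le> om p x s t"
  unfolding om_def by (rule cSup_upper) (use assms in \<open>auto simp: finite_pvar_def\<close>)

lemma om_least:
  assumes "s \<le> t" "\<And>n \<tau>. partition_of s t n \<tau> \<Longrightarrow> pvar_sum p x n \<tau> \<le> M"
  shows "om p x s t \<le> M"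
  unfolding om_def using part_exists[OF assms(1)] assms(2) by (intro cSup_least) auto

lemma om_nonneg:
  assumes "finite_pvar p x s t" "s \<le> t"
  shows "0 \<le> om p x s t"
  using part_exists[OF assms(2)] om_upper[OF assms(1)] pvar_sum_nonneg order_trans by metis

lemma om_refl: "om p x s s = 0"
proof -
  have "{pvar_sum p x n \<tau> | n \<tau>. partition_of s s n \<tau>} = {0}"
    using part_eq_zero part_refl by (fastforce simp: pvar_sum_def)
  then show ?thesis by (simp add: om_def)
qed

lemma om_mono:
  assumes "finite_pvar p x a b" "a \<le> s" "s \<le> t" "t \<le> b"
  shows "om p x s t \<le> om p x a b"
proof (rule om_least[OF assms(3)])
  fix n \<tau> assume "partition_of s t n \<tau>"
  then obtain m \<sigma> where "partition_of a b m \<sigma>" "pvar_sum p x n \<tau> \<le> pvar_sum p x m \<sigma>"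
    using pvar_sum_ext assms by blast
  then show "pvar_sum p x n \<tau> \<le> om p x a b" using om_upper[OF assms(1)] by fastforce
qed

lemma om_incr:
  assumes "finite_pvar p x s t" "s \<le> t"
  shows "norm (x t - x s) powr p \<le> om p x s t"
proof (cases "s = t")
  case True then show ?thesis by (simp add: om_refl)
next
  case False
  then have "partition_of s t 1 (\<lambda>i. if i = 0 then s else t)" using part_triv assms by simp
  from om_upper[OF assms(1) this] show ?thesis by (simp add: pvar_sum_def)
qed

lemma om_superadd:
  assumes "finite_pvar p x s t" "s \<le> u" "u \<le> t"
  shows "om p x s u + om p x u t \<le> om p x s t"
proof -
  have "om p x u t \<le> om p x s t - om p x s u"
  proof (rule om_least[OF assms(3)])
    fix n2 \<tau>2 assume P2: "partition_of u t n2 \<tau>2"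
    have "om p x s u \<le> om p x s t - pvar_sum p x n2 \<tau>2"
    proof (rule om_least[OF assms(2)])
      fix n1 \<tau>1 assume P1: "partition_of s u n1 \<tau>1"
      have "pvar_sum p x (n1 + n2) (cat n1 \<tau>1 \<tau>2) = pvar_sum p x n1 \<tau>1 + pvar_sum p x n2 \<tau>2"
        unfolding pvar_sum_psum by (rule psum_cat) (use P1 P2 in \<open>simp add: partition_of_def\<close>)
      moreover have "pvar_sum p x (n1 + n2) (cat n1 \<tau>1 \<tau>2) \<le> om p x s t"
        by (rule om_upper[OF assms(1) part_cat[OF P1 P2]])
      ultimately show "pvar_sum p x n1 \<tau>1 \<le> om p x s t - pvar_sum p x n2 \<tau>2" by simp
    qed
    then show "pvar_sum p x n2 \<tau>2 \<le> om p x s t - om p x s u" by simp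
  qed
  then show ?thesis by simp
qed




lemma powr_ge_one_neg: "0 < l \<Longrightarrow> l \<le> 1 \<Longrightarrow> e \<le> 0 \<Longrightarrow> 1 \<le> (l::real) powr e"
proof -
  assume a: "0 < l" "l \<le> 1" "e \<le> 0"
  have "l powr (-e) \<le> 1" using a by (intro powr_le1) auto
  moreover have "0 < l powr (-e)" using a by simp
  moreover have "l powr e = 1 / l powr (-e)" using a by (simp add: powr_minus_divide)
  ultimately show ?thesis by simp
qed

lemma conv_ineq:
  fixes u v l p :: real
  assumes p: "1 \<le> p" and l: "0 < l" "l < 1" and uv: "0 \<le> u" "0 \<le> v"
  shows "(u + v) powr p \<le> l powr (1 - p) * u powr p + (1 - l) powr (1 - p) * v powr p"
proof -
  have g1: "1 \<le> l powr (1 - p)" "1 \<le> (1 - l) powr (1 - p)"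
    using powr_ge_one_neg l p by auto
  consider "u = 0" | "v = 0" | "u > 0" "v > 0" using uv by linarith
  then show ?thesis
  proof cases
    case 1
    have "v powr p \<le> (1 - l) powr (1 - p) * v powr p"
      using mult_right_mono[OF g1(2), of "v powr p"] by simp
    then show ?thesis using 1 by simp
  next
    case 2
    have "u powr p \<le> l powr (1 - p) * u powr p"
      using mult_right_mono[OF g1(1), of "u powr p"] by simp
    then show ?thesis using 2 by simp
  next
    case 3
    have cv: "convex_on {0<..} (\<lambda>x::real. x powr p)" by (rule powr_convex[OF p])
    have X: "u / l \<in> {0<..}" "v / (1 - l) \<in> {0<..}" using 3 l by auto
    have "((1 - (1 - l)) *\<^sub>R (u / l) + (1 - l) *\<^sub>R (v / (1 - l))) powr p
        \<le> (1 - (1 - l)) * (u / l) powr p + (1 - l) * (v / (1 - l)) powr p"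
      using convex_onD[OF cv, of "1 - l" "u / l" "v / (1 - l)"] X l by simp
    moreover have "(1 - (1 - l)) *\<^sub>R (u / l) + (1 - l) *\<^sub>R (v / (1 - l)) = u + v"
      using l by simp
    moreover have "l * (u / l) powr p = l powr (1 - p) * u powr p"
      using l 3 by (simp add: powr_divide powr_diff)
    moreover have "(1 - l) * (v / (1 - l)) powr p = (1 - l) powr (1 - p) * v powr p"
      using l 3 by (simp add: powr_divide powr_diff)
    ultimately show ?thesis by simp
  qed
qed

lemma sum_powr_zero:
  fixes a :: "'i \<Rightarrow> real"
  assumes "finite I" "\<And>i. i \<in> I \<Longrightarrow> 0 \<le> a i" "(\<Sum>i\<in>I. a i powr p) = 0"
    and "i \<in> I"
  shows "a i = 0"
proof -
  have "\<forall>i\<in>I. a i powr p = 0"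
    by (subst sum_nonneg_eq_0_iff[symmetric]) (use assms in auto)
  then show "a i = 0" using assms(4) by simp
qed

lemma aux1:
  fixes P Q p :: real assumes "0 < P" "0 < Q"
  shows "(P / (P + Q)) powr (1 - p) * P powr p = (P + Q) powr (p - 1) * P"
proof -
  have "(P / (P + Q)) powr (1 - p) = P powr (1 - p) / (P + Q) powr (1 - p)"
    using assms by (simp add: powr_divide)
  also have "1 / (P + Q) powr (1 - p) = (P + Q) powr (p - 1)"
    using assms by (simp add: powr_minus_divide[symmetric])
  then have "P powr (1 - p) / (P + Q) powr (1 - p) = P powr (1 - p) * (P + Q) powr (p - 1)"
    by (metis times_divide_eq_right mult.right_neutral)
  finally have "(P / (P + Q)) powr (1 - p) * P powr p = (P + Q) powr (p - 1) * (P powr (1 - p) * P powr p)"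
    by simp
  also have "P powr (1 - p) * P powr p = P" using assms by (simp add: powr_add[symmetric])
  finally show ?thesis .
qed
lemma aux2:
  fixes P Q p :: real assumes "0 < P" "0 < Q"
  shows "(P + Q) powr (p - 1) * P + (P + Q) powr (p - 1) * Q = (P + Q) powr p"
proof -
  have "(P + Q) powr (p - 1) * P + (P + Q) powr (p - 1) * Q = (P + Q) powr (p - 1) * (P + Q) powr 1"
    using assms by (simp add: distrib_left)
  also have "(P + Q) powr 1 = P + Q" using assms by simp
  then have "(P + Q) powr (p - 1) * (P + Q) powr 1 = (P + Q) powr ((p - 1) + 1)"
    by (simp only: powr_add)
  also have "\<dots> = (P + Q) powr p" by simp
  finally show ?thesis .
qed

lemma minkowski:
  fixes a b :: "'i \<Rightarrow> real"
  assumes p: "1 \<le> p" and fin: "finite I" and nn: "\<And>i. i \<in> I \<Longrightarrow> 0 \<le> a i" "\<And>i. i \<in> I \<Longrightarrow> 0 \<le> b i"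
  shows "(\<Sum>i\<in>I. (a i + b i) powr p) powr (1/p)
     \<le> (\<Sum>i\<in>I. a i powr p) powr (1/p) + (\<Sum>i\<in>I. b i powr p) powr (1/p)"
proof -
  define SA where "SA = (\<Sum>i\<in>I. a i powr p)"
  define SB where "SB = (\<Sum>i\<in>I. b i powr p)"
  define P where "P = SA powr (1/p)"
  define Q where "Q = SB powr (1/p)"
  have SA0: "0 \<le> SA" "0 \<le> SB" unfolding SA_def SB_def by (auto intro: sum_nonneg)
  have P0: "0 \<le> P" "0 \<le> Q" unfolding P_def Q_def by auto
  have PP: "P powr p = SA" "Q powr p = SB" using SA0 p unfolding P_def Q_def
    by (auto simp: powr_powr)
  show ?thesis
  proof (cases "SA = 0 \<or> SB = 0")
    case True
    then show ?thesis
    proof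
      assume "SA = 0"
      then have "\<And>i. i \<in> I \<Longrightarrow> a i = 0" using sum_powr_zero[of I a p] fin nn(1) \<open>SA = 0\<close> unfolding SA_def by blast
      then have "(\<Sum>i\<in>I. (a i + b i) powr p) = SB" unfolding SB_def by (intro sum.cong) auto
      then show ?thesis using \<open>SA = 0\<close> unfolding SA_def[symmetric] SB_def[symmetric] using p by simp
    next
      assume "SB = 0"
      then have "\<And>i. i \<in> I \<Longrightarrow> b i = 0" using sum_powr_zero[of I b p] fin nn(2) \<open>SB = 0\<close> unfolding SB_def by blast
      then have "(\<Sum>i\<in>I. (a i + b i) powr p) = SA" unfolding SA_def by (intro sum.cong) auto
      then show ?thesis using \<open>SB = 0\<close> unfolding SA_def[symmetric] SB_def[symmetric] using p by simp
    qed
  next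
    case False
    then have Ppos: "0 < P" "0 < Q" using SA0 unfolding P_def Q_def by auto
    define l where "l = P / (P + Q)"
    have l: "0 < l" "l < 1" using Ppos unfolding l_def by auto
    have 1: "1 - l = Q / (P + Q)" using Ppos unfolding l_def by (simp add: field_simps)
    have "(\<Sum>i\<in>I. (a i + b i) powr p)
       \<le> (\<Sum>i\<in>I. l powr (1 - p) * a i powr p + (1 - l) powr (1 - p) * b i powr p)"
      by (intro sum_mono conv_ineq[OF p l] nn)
    also have "\<dots> = l powr (1 - p) * SA + (1 - l) powr (1 - p) * SB"
      unfolding SA_def SB_def by (simp add: sum.distrib sum_distrib_left)
    also have "l powr (1 - p) * SA = (P + Q) powr (p - 1) * P"
      unfolding l_def PP(1)[symmetric] using aux1[OF Ppos] .
    also have "(1 - l) powr (1 - p) * SB = (P + Q) powr (p - 1) * Q"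
      unfolding 1 PP(2)[symmetric] using aux1[OF Ppos(2,1)] by (simp add: add.commute)
    also have "(P + Q) powr (p - 1) * P + (P + Q) powr (p - 1) * Q = (P + Q) powr p"
      using aux2[OF Ppos] .
    finally have "(\<Sum>i\<in>I. (a i + b i) powr p) \<le> (P + Q) powr p" .
    then have "(\<Sum>i\<in>I. (a i + b i) powr p) powr (1/p) \<le> ((P + Q) powr p) powr (1/p)"
      by (intro powr_mono2) (use p nn in \<open>auto intro!: sum_nonneg\<close>)
    also have "\<dots> = P + Q" using p Ppos by (simp add: powr_powr)
    finally show ?thesis unfolding P_def Q_def SA_def SB_def .
  qed
qed




lemma sum_powr_le_powr_sum:
  fixes a :: "'i \<Rightarrow> real"
  assumes p: "1 \<le> p" and fin: "finite I" and nn: "\<And>i. i \<in> I \<Longrightarrow> 0 \<le> a i"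
  shows "(\<Sum>i\<in>I. a i powr p) \<le> (\<Sum>i\<in>I. a i) powr p"
proof -
  define S where "S = (\<Sum>i\<in>I. a i)"
  have le: "a i \<le> S" if "i \<in> I" for i
    unfolding S_def using that nn fin by (intro member_le_sum) auto
  have "a i powr p \<le> a i * S powr (p - 1)" if "i \<in> I" for i
  proof (cases "a i = 0")
    case True then show ?thesis using p by simp
  next
    case False
    then have pos: "0 < a i" using nn[OF that] by linarith
    have "a i powr p = a i powr (1 + (p - 1))" by simp
    also have "\<dots> = a i powr 1 * a i powr (p - 1)" by (rule powr_add)
    also have "\<dots> = a i * a i powr (p - 1)" using pos by simp
    also have "\<dots> \<le> a i * S powr (p - 1)"
      using pos le[OF that] p by (intro mult_left_mono powr_mono2) auto
    finally show ?thesis .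
  qed
  then have "(\<Sum>i\<in>I. a i powr p) \<le> (\<Sum>i\<in>I. a i * S powr (p - 1))" by (intro sum_mono)
  also have "\<dots> = S * S powr (p - 1)" unfolding S_def by (simp add: sum_distrib_right)
  also have "\<dots> = S powr p"
  proof (cases "S = 0")
    case True then show ?thesis using p by simp
  next
    case False
    have "0 \<le> S" unfolding S_def using nn by (simp add: sum_nonneg)
    then have "0 < S" using False by simp
    have "S powr p = S powr (1 + (p - 1))" by simp
    also have "\<dots> = S powr 1 * S powr (p - 1)" by (rule powr_add)
    finally show ?thesis using \<open>0 < S\<close> by simp
  qed
  finally show ?thesis unfolding S_def .
qed

lemma mink3:
  fixes L R \<alpha> \<beta> p :: real
  assumes p: "1 \<le> p" and nn: "0 \<le> L" "0 \<le> R" "0 \<le> \<alpha>" "0 \<le> \<beta>"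
  shows "(L + (\<alpha> + \<beta>) powr p + R) powr (1/p) \<le> (L + \<alpha> powr p) powr (1/p) + (\<beta> powr p + R) powr (1/p)"
proof -
  define a :: "nat \<Rightarrow> real" where "a = (\<lambda>i. if i = 0 then L powr (1/p) else if i = 1 then \<alpha> else 0)"
  define b :: "nat \<Rightarrow> real" where "b = (\<lambda>i. if i = 0 then 0 else if i = 1 then \<beta> else R powr (1/p))"
  have m: "(\<Sum>i\<in>{0,1,2}. (a i + b i) powr p) powr (1/p)
     \<le> (\<Sum>i\<in>{0,1,2}. a i powr p) powr (1/p) + (\<Sum>i\<in>{0,1,2}. b i powr p) powr (1/p)"
    by (rule minkowski[OF p]) (use nn in \<open>auto simp: a_def b_def\<close>)
  have LL: "(L powr (1/p)) powr p = L" "(R powr (1/p)) powr p = R" using p nn by (auto simp: powr_powr)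
  have "(\<Sum>i\<in>{0,1,2}. (a i + b i) powr p) = L + (\<alpha> + \<beta>) powr p + R"
    using p LL by (simp add: a_def b_def)
  moreover have "(\<Sum>i\<in>{0,1,2}. a i powr p) = L + \<alpha> powr p"
    using p LL by (simp add: a_def b_def)
  moreover have "(\<Sum>i\<in>{0,1,2}. b i powr p) = \<beta> powr p + R"
    using p LL by (simp add: a_def b_def)
  ultimately show ?thesis using m by simp
qed

lemma part_split_index:
  assumes P: "partition_of s t n \<tau>" and u: "s < u" "u < t"
  shows "\<exists>j<n. \<tau> j \<le> u \<and> u < \<tau> (Suc j)"
proof -
  have ex: "\<exists>k. k \<le> n \<and> u < \<tau> k" using P u by (auto simp: partition_of_def)
  define k where "k = (LEAST k. k \<le> n \<and> u < \<tau> k)"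
  have k: "k \<le> n" "u < \<tau> k" using LeastI_ex[OF ex] unfolding k_def by auto
  have "k \<noteq> 0"
  proof
    assume "k = 0" then show False using k P u by (auto simp: partition_of_def)
  qed
  then obtain j where j: "k = Suc j" by (cases k) auto
  have "\<not> (j \<le> n \<and> u < \<tau> j)" using not_less_Least[of j "\<lambda>k. k \<le> n \<and> u < \<tau> k"] j unfolding k_def by simp
  then show ?thesis using k j by (intro exI[of _ j]) auto
qed

lemma psum_split3:
  assumes "j < n"
  shows "psum \<phi> n \<tau> = psum \<phi> j \<tau> + \<phi> (\<tau> j) (\<tau> (Suc j))
     + (\<Sum>i<n - Suc j. \<phi> (\<tau> (Suc j + i)) (\<tau> (Suc (Suc j + i))))"
proof -
  have n: "n = Suc j + (n - Suc j)" using assms by simp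
  have "psum \<phi> n \<tau> = (\<Sum>i<Suc j + (n - Suc j). \<phi> (\<tau> i) (\<tau> (Suc i)))"
    unfolding psum_def using n by metis
  also have "\<dots> = psum \<phi> j \<tau> + \<phi> (\<tau> j) (\<tau> (Suc j))
     + (\<Sum>i<n - Suc j. \<phi> (\<tau> (Suc j + i)) (\<tau> (Suc (Suc j + i))))"
    unfolding sum_lessThan_add psum_def by simp
  finally show ?thesis .
qed

lemma part_split:
  fixes \<phi> :: "real \<Rightarrow> real \<Rightarrow> 'a::comm_monoid_add"
  assumes P: "partition_of s t n \<tau>" and j: "j < n" "\<tau> j \<le> u" "u < \<tau> (Suc j)"
    and \<phi>0: "\<And>v. \<phi> v v = 0"
  shows "\<exists>m1 \<sigma>1. partition_of s u m1 \<sigma>1 \<and> psum \<phi> m1 \<sigma>1 = psum \<phi> j \<tau> + \<phi> (\<tau> j) u"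
    and "partition_of u t (n - j) (\<lambda>i. if i = 0 then u else \<tau> (j + i))"
    and "psum \<phi> (n - j) (\<lambda>i. if i = 0 then u else \<tau> (j + i))
        = \<phi> u (\<tau> (Suc j)) + (\<Sum>i<n - Suc j. \<phi> (\<tau> (Suc j + i)) (\<tau> (Suc (Suc j + i))))"
proof -
  show "\<exists>m1 \<sigma>1. partition_of s u m1 \<sigma>1 \<and> psum \<phi> m1 \<sigma>1 = psum \<phi> j \<tau> + \<phi> (\<tau> j) u"
  proof (cases "\<tau> j = u")
    case True
    have "partition_of s u j \<tau>" using P j True by (auto simp: partition_of_def)
    then show ?thesis using True \<phi>0 by auto
  next
    case False
    then have lt: "\<tau> j < u" using j by simp
    define \<sigma>1 where "\<sigma>1 = (\<lambda>i. if i \<le> j then \<tau> i else u)"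
    have "partition_of s u (Suc j) \<sigma>1"
      unfolding partition_of_def
    proof (intro conjI allI impI)
      show "\<sigma>1 0 = s" using P by (simp add: \<sigma>1_def partition_of_def)
      show "\<sigma>1 (Suc j) = u" by (simp add: \<sigma>1_def)
      fix i assume "i < Suc j"
      then show "\<sigma>1 i < \<sigma>1 (Suc i)" using P lt j by (cases "i = j") (auto simp: \<sigma>1_def partition_of_def)
    qed
    moreover have "psum \<phi> (Suc j) \<sigma>1 = psum \<phi> j \<tau> + \<phi> (\<tau> j) u"
      unfolding psum_def by (simp add: \<sigma>1_def)
    ultimately show ?thesis by blast
  qed
  show "partition_of u t (n - j) (\<lambda>i. if i = 0 then u else \<tau> (j + i))"
    unfolding partition_of_def
  proof (intro conjI allI impI)
    show "(if n - j = 0 then u else \<tau> (j + (n - j))) = t" using P j by (auto simp: partition_of_def)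
    fix i assume i: "i < n - j"
    show "(if i = 0 then u else \<tau> (j + i)) < (if Suc i = 0 then u else \<tau> (j + Suc i))"
      using P i j by (auto simp: partition_of_def)
  qed simp
  have nj: "n - j = Suc (n - Suc j)" using j by simp
  show "psum \<phi> (n - j) (\<lambda>i. if i = 0 then u else \<tau> (j + i))
        = \<phi> u (\<tau> (Suc j)) + (\<Sum>i<n - Suc j. \<phi> (\<tau> (Suc j + i)) (\<tau> (Suc (Suc j + i))))"
    unfolding psum_def nj sum.lessThan_Suc_shift by simp
qed

lemma om_triangle:
  assumes p: "1 \<le> p" and fp: "finite_pvar p x s t" and u: "s \<le> u" "u \<le> t"
  shows "om p x s t powr (1/p) \<le> om p x s u powr (1/p) + om p x u t powr (1/p)"
proof -
  have fp1: "finite_pvar p x s u" and fp2: "finite_pvar p x u t"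
    using finite_pvar_sub[OF fp] u by auto
  have o0: "0 \<le> om p x s u" "0 \<le> om p x u t" using om_nonneg fp1 fp2 u by auto
  define A where "A = om p x s u powr (1/p)"
  define B where "B = om p x u t powr (1/p)"
  have AB: "0 \<le> A" "0 \<le> B" unfolding A_def B_def by auto
  have Ap: "A powr p = om p x s u" "B powr p = om p x u t"
    unfolding A_def B_def using o0 p by (auto simp: powr_powr)
  have "om p x s t \<le> (A + B) powr p"
  proof (rule om_least)
    show "s \<le> t" using u by simp
    fix n \<tau> assume P: "partition_of s t n \<tau>"
    show "pvar_sum p x n \<tau> \<le> (A + B) powr p"
    proof (cases "s = u \<or> u = t")
      case True
      have "pvar_sum p x n \<tau> \<le> om p x s t" by (rule om_upper[OF fp P])
      also have "om p x s t = (A + B) powr p"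
        using True Ap AB by (auto simp: om_refl A_def B_def)
      finally show ?thesis .
    next
      case False
      then have u': "s < u" "u < t" using u by auto
      obtain j where j: "j < n" "\<tau> j \<le> u" "u < \<tau> (Suc j)" using part_split_index[OF P u'] by blast
      define \<phi> where "\<phi> = (\<lambda>v w. norm (x w - x v) powr p)"
      have \<phi>0: "\<And>v. \<phi> v v = 0" unfolding \<phi>_def using p by simp
      define L where "L = psum \<phi> j \<tau>"
      define R where "R = (\<Sum>i<n - Suc j. \<phi> (\<tau> (Suc j + i)) (\<tau> (Suc (Suc j + i))))"
      define \<alpha> where "\<alpha> = norm (x u - x (\<tau> j))"
      define \<beta> where "\<beta> = norm (x (\<tau> (Suc j)) - x u)"
      have LR: "0 \<le> L" "0 \<le> R" unfolding L_def R_def \<phi>_def by (auto intro: psum_nonneg sum_nonneg)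
      have S1r: "\<exists>m1 \<sigma>1. partition_of s u m1 \<sigma>1 \<and> psum \<phi> m1 \<sigma>1 = psum \<phi> j \<tau> + \<phi> (\<tau> j) u"
        by (rule part_split(1)[OF P j \<phi>0])
      have ph: "\<phi> (\<tau> j) u = \<alpha> powr p" unfolding \<phi>_def \<alpha>_def ..
      obtain m1 \<sigma>1 where S1: "partition_of s u m1 \<sigma>1" "psum \<phi> m1 \<sigma>1 = L + \<alpha> powr p"
        using S1r unfolding L_def ph by blast
      have S2: "partition_of u t (n - j) (\<lambda>i. if i = 0 then u else \<tau> (j + i))"
         "psum \<phi> (n - j) (\<lambda>i. if i = 0 then u else \<tau> (j + i))
        = \<phi> u (\<tau> (Suc j)) + (\<Sum>i<n - Suc j. \<phi> (\<tau> (Suc j + i)) (\<tau> (Suc (Suc j + i))))"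
        by (rule part_split(2)[OF P j \<phi>0], rule part_split(3)[OF P j \<phi>0])
      have "L + \<alpha> powr p \<le> om p x s u"
        using om_upper[OF fp1 S1(1)] S1(2) unfolding pvar_sum_psum \<phi>_def[symmetric] by simp
      then have l1: "(L + \<alpha> powr p) powr (1/p) \<le> A"
        unfolding A_def using LR p by (intro powr_mono2) auto
      have ph2: "\<phi> u (\<tau> (Suc j)) = \<beta> powr p" unfolding \<phi>_def \<beta>_def ..
      have "\<beta> powr p + R \<le> om p x u t"
        using om_upper[OF fp2 S2(1)] S2(2) unfolding pvar_sum_psum \<phi>_def[symmetric] R_def[symmetric] ph2 by simp
      then have l2: "(\<beta> powr p + R) powr (1/p) \<le> B"
        unfolding B_def using LR p by (intro powr_mono2) auto
      have "pvar_sum p x n \<tau> = L + \<phi> (\<tau> j) (\<tau> (Suc j)) + R"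
        unfolding pvar_sum_psum L_def R_def \<phi>_def[symmetric] by (rule psum_split3[OF j(1)])
      also have "\<phi> (\<tau> j) (\<tau> (Suc j)) \<le> (\<alpha> + \<beta>) powr p"
      proof -
        have "norm (x (\<tau> (Suc j)) - x (\<tau> j)) \<le> \<alpha> + \<beta>"
          unfolding \<alpha>_def \<beta>_def using norm_triangle_ineq[of "x u - x (\<tau> j)" "x (\<tau> (Suc j)) - x u"]
          by simp
        then show ?thesis unfolding \<phi>_def using p by (intro powr_mono2) auto
      qed
      finally have le: "pvar_sum p x n \<tau> \<le> L + (\<alpha> + \<beta>) powr p + R" by simp
      have "(L + (\<alpha> + \<beta>) powr p + R) powr (1/p) \<le> A + B"
        using mink3[OF p LR(1,2), of \<alpha> \<beta>] l1 l2 unfolding \<alpha>_def \<beta>_def by simp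
      then have "((L + (\<alpha> + \<beta>) powr p + R) powr (1/p)) powr p \<le> (A + B) powr p"
        using AB p by (intro powr_mono2) auto
      then have "L + (\<alpha> + \<beta>) powr p + R \<le> (A + B) powr p"
        using LR p by (simp add: powr_powr)
      then show ?thesis using le by simp
    qed
  qed
  then have "om p x s t powr (1/p) \<le> ((A + B) powr p) powr (1/p)"
    using p om_nonneg[OF fp] u by (intro powr_mono2) auto
  also have "\<dots> = A + B" using AB p by (simp add: powr_powr)
  finally show ?thesis unfolding A_def B_def .
qed




definition RS :: "(real \<Rightarrow> real^'m^'d) \<Rightarrow> (real \<Rightarrow> real^'m) \<Rightarrow> nat \<Rightarrow> (nat \<Rightarrow> real) \<Rightarrow> real^'d" where
  "RS F x n \<tau> = psum (\<lambda>u v. F u *v (x v - x u)) n \<tau>"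

lemma ctrl_psum:
  fixes \<omega> :: "real \<Rightarrow> real \<Rightarrow> real"
  assumes P: "partition_of s t n \<tau>"
    and sa: "\<And>u v w. s \<le> u \<Longrightarrow> u \<le> v \<Longrightarrow> v \<le> w \<Longrightarrow> w \<le> t \<Longrightarrow> \<omega> u v + \<omega> v w \<le> \<omega> u w"
    and nn: "\<And>u v. s \<le> u \<Longrightarrow> u \<le> v \<Longrightarrow> v \<le> t \<Longrightarrow> 0 \<le> \<omega> u v"
  shows "psum \<omega> n \<tau> \<le> \<omega> s t"
proof -
  have "k \<le> n \<Longrightarrow> psum \<omega> k \<tau> \<le> \<omega> s (\<tau> k)" for k
  proof (induction k)
    case 0
    have "s \<le> t" using part_le[OF P] .
    then show ?case using nn[of s s] P by (simp add: psum_def partition_of_def)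
  next
    case (Suc k)
    have r: "s \<le> \<tau> k" "\<tau> k \<le> \<tau> (Suc k)" "\<tau> (Suc k) \<le> t"
      using part_range[OF P] part_mono[OF P, of k "Suc k"] Suc.prems by auto
    have "psum \<omega> (Suc k) \<tau> = psum \<omega> k \<tau> + \<omega> (\<tau> k) (\<tau> (Suc k))" by (simp add: psum_def)
    also have "\<dots> \<le> \<omega> s (\<tau> k) + \<omega> (\<tau> k) (\<tau> (Suc k))" using Suc by simp
    also have "\<dots> \<le> \<omega> s (\<tau> (Suc k))" using sa r by simp
    finally show ?case .
  qed
  from this[of n] P show ?thesis by (simp add: partition_of_def)
qed

definition del :: "nat \<Rightarrow> (nat \<Rightarrow> real) \<Rightarrow> nat \<Rightarrow> real" where
  "del i \<tau> = (\<lambda>j. if j < i then \<tau> j else \<tau> (Suc j))"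

lemma part_del:
  assumes P: "partition_of s t n \<tau>" and k: "Suc (Suc k) \<le> n"
  shows "partition_of s t (n - 1) (del (Suc k) \<tau>)"
  unfolding partition_of_def
proof (intro conjI allI impI)
  show "del (Suc k) \<tau> 0 = s" using P by (simp add: del_def partition_of_def)
  show "del (Suc k) \<tau> (n - 1) = t" using P k by (auto simp: del_def partition_of_def)
  fix i assume i: "i < n - 1"
  show "del (Suc k) \<tau> i < del (Suc k) \<tau> (Suc i)"
  proof (cases "i = k")
    case True
    then show ?thesis using part_mono_strict[OF P, of k "Suc (Suc k)"] k by (simp add: del_def)
  next
    case False
    then show ?thesis using P i by (auto simp: del_def partition_of_def)
  qed
qed

lemma psum_del:
  fixes \<phi> :: "real \<Rightarrow> real \<Rightarrow> 'a::ab_group_add"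
  assumes k: "Suc (Suc k) \<le> n"
  shows "psum \<phi> n \<tau> = psum \<phi> (n - 1) (del (Suc k) \<tau>) - \<phi> (\<tau> k) (\<tau> (Suc (Suc k)))
      + \<phi> (\<tau> k) (\<tau> (Suc k)) + \<phi> (\<tau> (Suc k)) (\<tau> (Suc (Suc k)))"
proof -
  define r where "r = n - Suc (Suc k)"
  have n: "n = k + Suc (Suc r)" using k unfolding r_def by simp
  have n1: "n - 1 = k + Suc r" using n by simp
  have A: "psum \<phi> n \<tau> = (\<Sum>i<k. \<phi> (\<tau> i) (\<tau> (Suc i))) + \<phi> (\<tau> k) (\<tau> (Suc k))
      + \<phi> (\<tau> (Suc k)) (\<tau> (Suc (Suc k))) + (\<Sum>i<r. \<phi> (\<tau> (Suc (Suc k) + i)) (\<tau> (Suc (Suc (Suc k) + i))))"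
    unfolding psum_def n sum_lessThan_add sum.lessThan_Suc_shift by (simp add: add.assoc)
  have B: "psum \<phi> (n - 1) (del (Suc k) \<tau>) = (\<Sum>i<k. \<phi> (\<tau> i) (\<tau> (Suc i))) + \<phi> (\<tau> k) (\<tau> (Suc (Suc k)))
      + (\<Sum>i<r. \<phi> (\<tau> (Suc (Suc k) + i)) (\<tau> (Suc (Suc (Suc k) + i))))"
    unfolding psum_def n1 sum_lessThan_add sum.lessThan_Suc_shift by (simp add: del_def add.assoc)
  show ?thesis unfolding A B by (simp add: algebra_simps)
qed

lemma RS_del:
  assumes k: "Suc (Suc k) \<le> n"
  shows "RS F x n \<tau> = RS F x (n - 1) (del (Suc k) \<tau>)
     + (F (\<tau> (Suc k)) - F (\<tau> k)) *v (x (\<tau> (Suc (Suc k))) - x (\<tau> (Suc k)))"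
  unfolding RS_def psum_del[OF k, of "\<lambda>u v. F u *v (x v - x u)"]
  by (simp add: algebra_simps matrix_vector_mult_diff_distrib matrix_vector_mult_diff_rdistrib)

lemma select_small:
  fixes a b :: "nat \<Rightarrow> real"
  assumes m: "0 < m" and nn: "\<And>k. k < m \<Longrightarrow> 0 \<le> a k" "\<And>k. k < m \<Longrightarrow> 0 \<le> b k"
    and A: "(\<Sum>k<m. a k) \<le> A" and B: "(\<Sum>k<m. b k) \<le> B"
  shows "\<exists>k<m. a k * b k \<le> A * B / (real m)\<^sup>2"
proof (rule ccontr)
  assume "\<not> ?thesis"
  then have big: "\<And>k. k < m \<Longrightarrow> A * B / (real m)\<^sup>2 < a k * b k" by auto
  have "0 \<le> (\<Sum>k<m. a k)" "0 \<le> (\<Sum>k<m. b k)" using nn by (auto intro!: sum_nonneg)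
  then have A0: "0 \<le> A" "0 \<le> B" using A B by linarith+
  define c where "c = sqrt (A * B) / real m"
  have "sqrt (A * B / (real m)\<^sup>2) = c" unfolding c_def using m by (simp add: real_sqrt_divide)
  then have cl: "c < sqrt (a k) * sqrt (b k)" if "k < m" for k
    using big[OF that] by (metis real_sqrt_less_mono real_sqrt_mult)
  have "(\<Sum>k<m. c) < (\<Sum>k<m. sqrt (a k) * sqrt (b k))"
    using m cl by (intro sum_strict_mono) auto
  moreover have "(\<Sum>k<m. c) = sqrt (A * B)" unfolding c_def using m by simp
  ultimately have lt: "sqrt (A * B) < (\<Sum>k<m. sqrt (a k) * sqrt (b k))" by simp
  have "(\<Sum>k<m. sqrt (a k) * sqrt (b k))\<^sup>2 \<le> (\<Sum>k<m. (sqrt (a k))\<^sup>2) * (\<Sum>k<m. (sqrt (b k))\<^sup>2)"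
    by (rule Cauchy_Schwarz_ineq_sum)
  also have "\<dots> = (\<Sum>k<m. a k) * (\<Sum>k<m. b k)" using nn by (intro arg_cong2[where f="(*)"] sum.cong) auto
  also have "\<dots> \<le> A * B" using A B nn A0 by (intro mult_mono) (auto intro!: sum_nonneg)
  finally have "(\<Sum>k<m. sqrt (a k) * sqrt (b k))\<^sup>2 \<le> A * B" .
  then have "(\<Sum>k<m. sqrt (a k) * sqrt (b k)) \<le> sqrt (A * B)"
    using real_le_rsqrt by blast
  then show False using lt by simp
qed

definition cc :: "real \<Rightarrow> nat \<Rightarrow> real" where
  "cc p n = (\<Sum>j<n. real j powr (-(2/p)))"

lemma cc_nonneg: "0 \<le> cc p n"
  unfolding cc_def by (auto intro: sum_nonneg)

lemma YL_partition:
  fixes F :: "real \<Rightarrow> real^'m^'d" and x :: "real \<Rightarrow> real^'m" and \<omega>1 \<omega>2 :: "real \<Rightarrow> real \<Rightarrow> real"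
  assumes p: "0 < p"
    and sa1: "\<And>u v w. s \<le> u \<Longrightarrow> u \<le> v \<Longrightarrow> v \<le> w \<Longrightarrow> w \<le> t \<Longrightarrow> \<omega>1 u v + \<omega>1 v w \<le> \<omega>1 u w"
    and nn1: "\<And>u v. s \<le> u \<Longrightarrow> u \<le> v \<Longrightarrow> v \<le> t \<Longrightarrow> 0 \<le> \<omega>1 u v"
    and sa2: "\<And>u v w. s \<le> u \<Longrightarrow> u \<le> v \<Longrightarrow> v \<le> w \<Longrightarrow> w \<le> t \<Longrightarrow> \<omega>2 u v + \<omega>2 v w \<le> \<omega>2 u w"
    and nn2: "\<And>u v. s \<le> u \<Longrightarrow> u \<le> v \<Longrightarrow> v \<le> t \<Longrightarrow> 0 \<le> \<omega>2 u v"
    and Fb: "\<And>u v. s \<le> u \<Longrightarrow> u \<le> v \<Longrightarrow> v \<le> t \<Longrightarrow> onorm (\<lambda>w. (F v - F u) *v w) \<le> \<omega>1 u v powr (1/p)"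
    and xb: "\<And>u v. s \<le> u \<Longrightarrow> u \<le> v \<Longrightarrow> v \<le> t \<Longrightarrow> norm (x v - x u) \<le> \<omega>2 u v powr (1/p)"
  shows "partition_of s t n \<tau> \<Longrightarrow>
     norm (RS F x n \<tau> - F s *v (x t - x s)) \<le> cc p n * (\<omega>1 s t * \<omega>2 s t) powr (1/p)"
proof (induction n arbitrary: \<tau>)
  case 0
  then have "s = t" by (simp add: partition_of_def)
  then show ?case by (simp add: RS_def psum_def cc_def)
next
  case (Suc m)
  note P = Suc.prems
  have st: "s \<le> t" using part_le[OF P] .
  define A where "A = \<omega>1 s t"
  define B where "B = \<omega>2 s t"
  have AB0: "0 \<le> A" "0 \<le> B" unfolding A_def B_def using nn1 nn2 st by auto
  show ?case
  proof (cases "m = 0")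
    case True
    then have "RS F x (Suc m) \<tau> = F s *v (x t - x s)" using P by (simp add: RS_def psum_def partition_of_def)
    then show ?thesis using cc_nonneg by simp
  next
    case False
    then have m: "0 < m" by simp
    define a where "a = (\<lambda>k. \<omega>1 (\<tau> k) (\<tau> (Suc k)))"
    define b where "b = (\<lambda>k. \<omega>2 (\<tau> (Suc k)) (\<tau> (Suc (Suc k))))"
    have rng: "s \<le> \<tau> k" "\<tau> k \<le> \<tau> (Suc k)" "\<tau> (Suc k) \<le> t" if "k < Suc m" for k
      using part_range[OF P] part_mono[OF P, of k "Suc k"] that by auto
    have an: "0 \<le> a k" if "k < m" for k unfolding a_def using rng[of k] that nn1 by simp
    have bn: "0 \<le> b k" if "k < m" for k unfolding b_def using rng[of "Suc k"] that nn2 by simp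
    have "0 \<le> a m" unfolding a_def using rng[of m] nn1 by simp
    then have "(\<Sum>k<m. a k) \<le> (\<Sum>k<Suc m. a k)" by simp
    also have "\<dots> = psum \<omega>1 (Suc m) \<tau>" unfolding a_def psum_def ..
    also have "\<dots> \<le> A" unfolding A_def by (rule ctrl_psum[OF P sa1 nn1])
    finally have sA: "(\<Sum>k<m. a k) \<le> A" .
    have "(\<Sum>k<m. b k) \<le> \<omega>2 (\<tau> 0) (\<tau> (Suc 0)) + (\<Sum>k<m. b k)"
      using rng[of 0] nn2 by simp
    also have "\<dots> = psum \<omega>2 (Suc m) \<tau>" unfolding b_def psum_def sum.lessThan_Suc_shift ..
    also have "\<dots> \<le> B" unfolding B_def by (rule ctrl_psum[OF P sa2 nn2])
    finally have sB: "(\<Sum>k<m. b k) \<le> B" .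
    obtain k where k: "k < m" "a k * b k \<le> A * B / (real m)\<^sup>2"
      using select_small[OF m an bn sA sB] by blast
    have k2: "Suc (Suc k) \<le> Suc m" using k by simp
    have P': "partition_of s t m (del (Suc k) \<tau>)" using part_del[OF P k2] by simp
    have IH: "norm (RS F x m (del (Suc k) \<tau>) - F s *v (x t - x s)) \<le> cc p m * (A * B) powr (1/p)"
      using Suc.IH[OF P'] unfolding A_def B_def .
    define D where "D = (F (\<tau> (Suc k)) - F (\<tau> k)) *v (x (\<tau> (Suc (Suc k))) - x (\<tau> (Suc k)))"
    have RSe: "RS F x (Suc m) \<tau> = RS F x m (del (Suc k) \<tau>) + D"
      using RS_del[OF k2, of F x \<tau>] unfolding D_def by simp
    have r1: "s \<le> \<tau> k" "\<tau> k \<le> \<tau> (Suc k)" "\<tau> (Suc k) \<le> t" using rng[of k] k by auto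
    have r2: "\<tau> (Suc k) \<le> \<tau> (Suc (Suc k))" "\<tau> (Suc (Suc k)) \<le> t" using rng[of "Suc k"] k by auto
    have "norm D \<le> onorm (\<lambda>w. (F (\<tau> (Suc k)) - F (\<tau> k)) *v w) * norm (x (\<tau> (Suc (Suc k))) - x (\<tau> (Suc k)))"
      unfolding D_def by (rule onorm) simp
    also have "\<dots> \<le> a k powr (1/p) * b k powr (1/p)"
      unfolding a_def b_def
    proof (rule mult_mono)
      show "onorm (\<lambda>w. (F (\<tau> (Suc k)) - F (\<tau> k)) *v w) \<le> \<omega>1 (\<tau> k) (\<tau> (Suc k)) powr (1 / p)"
        by (rule Fb[OF r1])
      show "norm (x (\<tau> (Suc (Suc k))) - x (\<tau> (Suc k))) \<le> \<omega>2 (\<tau> (Suc k)) (\<tau> (Suc (Suc k))) powr (1 / p)"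
        using r1 r2 by (intro xb) auto
    qed auto
    also have "\<dots> = (a k * b k) powr (1/p)" using an[OF k(1)] bn[OF k(1)] by (simp add: powr_mult)
    also have "\<dots> \<le> (A * B / (real m)\<^sup>2) powr (1/p)"
      using k an[OF k(1)] bn[OF k(1)] p by (intro powr_mono2) auto
    also have "\<dots> = real m powr (-(2/p)) * (A * B) powr (1/p)"
    proof -
      have e: "(real m)\<^sup>2 = real m powr 2" using m powr_realpow[of "real m" 2] by simp
      have "((real m)\<^sup>2) powr (1/p) = real m powr (2 * (1/p))" unfolding e by (rule powr_powr)
      then have "((real m)\<^sup>2) powr (1/p) = real m powr (2/p)" by simp
      moreover have "(A * B / (real m)\<^sup>2) powr (1/p) = (A * B) powr (1/p) / ((real m)\<^sup>2) powr (1/p)"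
        using AB0 by (simp add: powr_divide)
      moreover have "real m powr (-(2/p)) = 1 / real m powr (2/p)"
        by (rule powr_minus_divide)
      ultimately show ?thesis by simp
    qed
    finally have Dle: "norm D \<le> real m powr (-(2/p)) * (A * B) powr (1/p)" .
    have "norm (RS F x (Suc m) \<tau> - F s *v (x t - x s))
        \<le> norm (RS F x m (del (Suc k) \<tau>) - F s *v (x t - x s)) + norm D"
      unfolding RSe by (rule order_trans[OF _ norm_triangle_ineq]) (simp add: algebra_simps)
    also have "\<dots> \<le> cc p m * (A * B) powr (1/p) + real m powr (-(2/p)) * (A * B) powr (1/p)"
      using IH Dle by simp
    also have "\<dots> = cc p (Suc m) * (A * B) powr (1/p)" by (simp add: cc_def algebra_simps)
    finally show ?thesis unfolding A_def B_def .
  qed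
qed




lemma cc_dyadic:
  fixes \<theta> :: real assumes th: "1 < \<theta>"
  shows "(\<Sum>j<(2::nat)^k. real j powr (-\<theta>)) \<le> (\<Sum>i<k. (2 powr (1 - \<theta>))^i)"
proof (induction k)
  case 0 then show ?case by simp
next
  case (Suc k)
  have sp: "(2::nat)^Suc k = 2^k + 2^k" by simp
  have t: "real (2^k + i) powr (-\<theta>) \<le> real ((2::nat)^k) powr (-\<theta>)" for i
    using th by (intro powr_mono2') auto
  have "(\<Sum>i<(2::nat)^k. real (2^k + i) powr (-\<theta>)) \<le> (\<Sum>i<(2::nat)^k. real ((2::nat)^k) powr (-\<theta>))"
    by (intro sum_mono t)
  also have "\<dots> = real ((2::nat)^k) * real ((2::nat)^k) powr (-\<theta>)" by simp
  also have "\<dots> = (2 powr (1 - \<theta>))^k"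
  proof -
    have e: "real ((2::nat)^k) = 2 powr real k" by (simp add: powr_realpow)
    have pp: "(2 powr real k) powr (-\<theta>) = 2 powr (real k * (-\<theta>))" by (rule powr_powr)
    have "2 powr real k * (2 powr real k) powr (-\<theta>) = 2 powr (real k + real k * (-\<theta>))"
      unfolding pp by (rule powr_add[symmetric])
    also have "\<dots> = (2 powr (1 - \<theta>)) powr real k" by (simp add: powr_powr algebra_simps)
    also have "\<dots> = (2 powr (1 - \<theta>))^k" by (simp add: powr_realpow)
    finally show ?thesis unfolding e .
  qed
  finally have B: "(\<Sum>i<(2::nat)^k. real (2^k + i) powr (-\<theta>)) \<le> (2 powr (1 - \<theta>))^k" .
  have "(\<Sum>j<(2::nat)^Suc k. real j powr (-\<theta>)) = (\<Sum>j<(2::nat)^k. real j powr (-\<theta>)) + (\<Sum>i<(2::nat)^k. real (2^k + i) powr (-\<theta>))"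
    unfolding sp sum_lessThan_add by simp
  also have "\<dots> \<le> (\<Sum>i<k. (2 powr (1 - \<theta>))^i) + (2 powr (1 - \<theta>))^k" using Suc B by simp
  finally show ?case by simp
qed

lemma cc_le_K:
  assumes p: "1 < p" "p < 2"
  shows "cc p n \<le> K_const p"
proof -
  define \<theta> where "\<theta> = 2 / p"
  have th: "1 < \<theta>" unfolding \<theta>_def using p by simp
  define r where "r = 2 powr (1 - \<theta>)"
  have "(2::real) powr (1 - \<theta>) < 2 powr 0" using th by (intro powr_less_mono) auto
  then have r: "0 < r" "r < 1" unfolding r_def by auto
  have "n < 2^n" by (rule less_exp)
  then have "cc p n \<le> cc p (2^n)" unfolding cc_def
    by (intro sum_mono2) auto
  also have "\<dots> \<le> (\<Sum>i<n. r^i)" unfolding cc_def r_def using cc_dyadic[OF th, of n] by (simp add: \<theta>_def)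
  also have "\<dots> = (1 - r^n) / (1 - r)" using r by (simp add: sum_gp_strict)
  also have "\<dots> \<le> 1 / (1 - r)" using r by (intro divide_right_mono) auto
  also have "\<dots> = K_const p" unfolding K_const_def r_def \<theta>_def ..
  finally show ?thesis .
qed




lemma part_mesh:
  assumes "s \<le> t" "0 < \<delta>"
  shows "\<exists>n \<tau>. partition_of s t n \<tau> \<and> (\<forall>i<n. \<tau> (Suc i) - \<tau> i < \<delta>)"
proof (cases "s = t")
  case True then show ?thesis using part_refl[of s] by blast
next
  case False
  then have st: "s < t" using assms by simp
  define n where "n = nat \<lceil>(t - s) / \<delta>\<rceil> + 1"
  have n0: "0 < n" unfolding n_def by simp
  have "(t - s) / \<delta> < real n" unfolding n_def by linarith
  then have d: "(t - s) / real n < \<delta>" using n0 assms by (simp add: field_simps)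
  define \<tau> where "\<tau> = (\<lambda>i. s + (t - s) * real i / real n)"
  have "partition_of s t n \<tau>"
    unfolding partition_of_def \<tau>_def using n0 st by (auto simp: field_simps)
  moreover have "\<tau> (Suc i) - \<tau> i = (t - s) / real n" for i
  proof -
    have "\<tau> (Suc i) - \<tau> i = ((t - s) * real (Suc i) - (t - s) * real i) / real n"
      unfolding \<tau>_def by (simp add: diff_divide_distrib)
    also have "(t - s) * real (Suc i) - (t - s) * real i = t - s" by (simp add: algebra_simps)
    finally show ?thesis .
  qed
  ultimately show ?thesis using d by (intro exI[of _ n] exI[of _ \<tau>]) auto
qed

lemma cat_mesh:
  assumes "\<forall>i<n1. \<tau>1 (Suc i) - \<tau>1 i < \<delta>" "\<forall>i<n2. \<tau>2 (Suc i) - \<tau>2 i < \<delta>" "\<tau>1 n1 = \<tau>2 0"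
  shows "\<forall>i<n1 + n2. cat n1 \<tau>1 \<tau>2 (Suc i) - cat n1 \<tau>1 \<tau>2 i < \<delta>"
proof (intro allI impI)
  fix i assume i: "i < n1 + n2"
  show "cat n1 \<tau>1 \<tau>2 (Suc i) - cat n1 \<tau>1 \<tau>2 i < \<delta>"
  proof (cases "i < n1")
    case True then show ?thesis using assms by (simp add: cat_def)
  next
    case False
    then have "Suc i - n1 = Suc (i - n1)" "i - n1 < n2" using i by auto
    then show ?thesis using assms False by (auto simp: cat_def)
  qed
qed

lemma young_sum_RS:
  "(\<Sum>i<n. F (\<tau> i) *v (x (\<tau> (Suc i)) - x (\<tau> i))) = RS F x n \<tau>"
  by (simp add: RS_def psum_def)

lemma young_incr:
  assumes au: "a \<le> u" "u \<le> v"
    and Iu: "has_young_integral F x a u Iu" and Iv: "has_young_integral F x a v Iv"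
    and bd: "\<And>n \<tau>. partition_of u v n \<tau> \<Longrightarrow> norm (RS F x n \<tau> - F u *v (x v - x u)) \<le> M"
  shows "norm (Iv - Iu - F u *v (x v - x u)) \<le> M"
proof (rule field_le_epsilon)
  fix e :: real assume e: "0 < e"
  have "\<exists>\<delta>>0. \<forall>n \<tau> \<xi>. partition_of a u n \<tau> \<and> (\<forall>i<n. \<tau> i \<le> \<xi> i \<and> \<xi> i \<le> \<tau> (Suc i))
        \<and> (\<forall>i<n. \<tau> (Suc i) - \<tau> i < \<delta>) \<longrightarrow>
        norm ((\<Sum>i<n. F (\<xi> i) *v (x (\<tau> (Suc i)) - x (\<tau> i))) - Iu) < e/2"
    using Iu[unfolded has_young_integral_def, rule_format, of "e/2"] e by simp
  then obtain d1 where d1: "d1 > 0" "\<forall>n \<tau> \<xi>. partition_of a u n \<tau> \<and> (\<forall>i<n. \<tau> i \<le> \<xi> i \<and> \<xi> i \<le> \<tau> (Suc i))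
        \<and> (\<forall>i<n. \<tau> (Suc i) - \<tau> i < d1) \<longrightarrow>
        norm ((\<Sum>i<n. F (\<xi> i) *v (x (\<tau> (Suc i)) - x (\<tau> i))) - Iu) < e/2"
    by blast
  have "\<exists>\<delta>>0. \<forall>n \<tau> \<xi>. partition_of a v n \<tau> \<and> (\<forall>i<n. \<tau> i \<le> \<xi> i \<and> \<xi> i \<le> \<tau> (Suc i))
        \<and> (\<forall>i<n. \<tau> (Suc i) - \<tau> i < \<delta>) \<longrightarrow>
        norm ((\<Sum>i<n. F (\<xi> i) *v (x (\<tau> (Suc i)) - x (\<tau> i))) - Iv) < e/2"
    using Iv[unfolded has_young_integral_def, rule_format, of "e/2"] e by simp
  then obtain d2 where d2: "d2 > 0" "\<forall>n \<tau> \<xi>. partition_of a v n \<tau> \<and> (\<forall>i<n. \<tau> i \<le> \<xi> i \<and> \<xi> i \<le> \<tau> (Suc i))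
        \<and> (\<forall>i<n. \<tau> (Suc i) - \<tau> i < d2) \<longrightarrow>
        norm ((\<Sum>i<n. F (\<xi> i) *v (x (\<tau> (Suc i)) - x (\<tau> i))) - Iv) < e/2"
    by blast
  define d where "d = min d1 d2"
  have d: "0 < d" using d1 d2 unfolding d_def by simp
  obtain n1 \<tau>1 where P1: "partition_of a u n1 \<tau>1" "\<forall>i<n1. \<tau>1 (Suc i) - \<tau>1 i < d"
    using part_mesh[OF au(1) d] by blast
  obtain n2 \<tau>2 where P2: "partition_of u v n2 \<tau>2" "\<forall>i<n2. \<tau>2 (Suc i) - \<tau>2 i < d"
    using part_mesh[OF au(2) d] by blast
  have j: "\<tau>1 n1 = \<tau>2 0" using P1 P2 by (simp add: partition_of_def)
  have P: "partition_of a v (n1 + n2) (cat n1 \<tau>1 \<tau>2)" using part_cat[OF P1(1) P2(1)] .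
  have Pm: "\<forall>i<n1 + n2. cat n1 \<tau>1 \<tau>2 (Suc i) - cat n1 \<tau>1 \<tau>2 i < d"
    using cat_mesh[OF P1(2) P2(2) j] .
  have tg1: "\<forall>i<n1. \<tau>1 i \<le> \<tau>1 i \<and> \<tau>1 i \<le> \<tau>1 (Suc i)"
    using P1(1) by (auto simp: partition_of_def less_imp_le)
  have m1: "\<forall>i<n1. \<tau>1 (Suc i) - \<tau>1 i < d1" using P1(2) unfolding d_def by force
  have e1: "norm (RS F x n1 \<tau>1 - Iu) < e/2"
    using d1(2)[rule_format, of n1 \<tau>1 \<tau>1] P1(1) tg1 m1 unfolding young_sum_RS by blast
  have tg2: "\<forall>i<n1 + n2. cat n1 \<tau>1 \<tau>2 i \<le> cat n1 \<tau>1 \<tau>2 i \<and> cat n1 \<tau>1 \<tau>2 i \<le> cat n1 \<tau>1 \<tau>2 (Suc i)"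
    using P by (auto simp: partition_of_def less_imp_le)
  have m2: "\<forall>i<n1 + n2. cat n1 \<tau>1 \<tau>2 (Suc i) - cat n1 \<tau>1 \<tau>2 i < d2" using Pm unfolding d_def by force
  have e2: "norm (RS F x (n1 + n2) (cat n1 \<tau>1 \<tau>2) - Iv) < e/2"
    using d2(2)[rule_format, of "n1 + n2" "cat n1 \<tau>1 \<tau>2" "cat n1 \<tau>1 \<tau>2"] P tg2 m2 unfolding young_sum_RS by blast
  have RSc: "RS F x (n1 + n2) (cat n1 \<tau>1 \<tau>2) = RS F x n1 \<tau>1 + RS F x n2 \<tau>2"
    unfolding RS_def by (rule psum_cat[of \<tau>1 n1 \<tau>2, OF j])
  have e3: "norm (RS F x n2 \<tau>2 - F u *v (x v - x u)) \<le> M" by (rule bd[OF P2(1)])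
  have "Iv - Iu - F u *v (x v - x u) = (Iv - RS F x (n1 + n2) (cat n1 \<tau>1 \<tau>2)) + (RS F x n1 \<tau>1 - Iu)
      + (RS F x n2 \<tau>2 - F u *v (x v - x u))"
    unfolding RSc by (simp add: algebra_simps)
  moreover have "norm (X + Y + Z) \<le> norm X + norm Y + norm Z" for X Y Z :: "real^'d"
    using norm_triangle_ineq[of "X + Y" Z] norm_triangle_ineq[of X Y] by linarith
  ultimately have "norm (Iv - Iu - F u *v (x v - x u)) \<le> norm (Iv - RS F x (n1 + n2) (cat n1 \<tau>1 \<tau>2))
      + norm (RS F x n1 \<tau>1 - Iu) + norm (RS F x n2 \<tau>2 - F u *v (x v - x u))"
    by metis
  also have "\<dots> \<le> M + e" using e1 e2 e3 by (simp add: norm_minus_commute)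
  finally show "norm (Iv - Iu - F u *v (x v - x u)) \<le> M + e" .
qed




lemma near_point:
  fixes x :: "real \<Rightarrow> 'a::real_normed_vector"
  assumes xc: "continuous_on {a..b} x" and c: "c \<in> {a..b}" and p: "0 < p" and \<eta>: "0 < \<eta>"
  shows "\<exists>\<delta>>0. \<forall>r\<in>{a..b}. \<bar>r - c\<bar> < \<delta> \<longrightarrow> norm (x z - x c) powr p - \<eta> < norm (x z - x r) powr p"
proof -
  have "(x \<longlongrightarrow> x c) (at c within {a..b})" using xc c unfolding continuous_on_def by blast
  then have "((\<lambda>r. norm (x z - x r) powr p) \<longlongrightarrow> norm (x z - x c) powr p) (at c within {a..b})"
    using p by (intro tendsto_intros) auto
  then have "eventually (\<lambda>r. norm (x z - x c) powr p - \<eta> < norm (x z - x r) powr p) (at c within {a..b})"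
    using \<eta> by (intro order_tendstoD(1)) auto
  then obtain d where d: "d > 0" "\<forall>r\<in>{a..b}. r \<noteq> c \<and> dist r c < d \<longrightarrow> norm (x z - x c) powr p - \<eta> < norm (x z - x r) powr p"
    unfolding eventually_at by blast
  show ?thesis
  proof (intro exI[of _ d] conjI ballI impI)
    fix r assume r: "r \<in> {a..b}" "\<bar>r - c\<bar> < d"
    show "norm (x z - x c) powr p - \<eta> < norm (x z - x r) powr p"
    proof (cases "r = c")
      case True then show ?thesis using \<eta> by simp
    next
      case False then show ?thesis using d r by (simp add: dist_real_def)
    qed
  qed (use d in auto)
qed

lemma om_ge_step_right:
  fixes x :: "real \<Rightarrow> 'a::real_normed_vector"
  assumes xc: "continuous_on {a..b} x" and fp: "finite_pvar p x a b" and p: "0 < p"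
    and cd: "a \<le> c" "c < d" "d \<le> b" and big: "\<epsilon> \<le> om p x c d" and \<epsilon>: "0 < \<epsilon>"
  shows "\<exists>d'. c < d' \<and> d' < d \<and> \<epsilon>/2 \<le> om p x d' d"
proof -
  have fcd: "finite_pvar p x c d" using finite_pvar_sub[OF fp] cd by auto
  have ne: "{pvar_sum p x n \<tau> |n \<tau>. partition_of c d n \<tau>} \<noteq> {}" using part_exists[of c d] cd by auto
  have "3 * \<epsilon> / 4 < om p x c d" using big \<epsilon> by simp
  then obtain z where "z \<in> {pvar_sum p x n \<tau> |n \<tau>. partition_of c d n \<tau>}" "3 * \<epsilon> / 4 < z"
    unfolding om_def using less_cSupE[OF _ ne] by blast
  then obtain n \<tau> where P: "partition_of c d n \<tau>" and S: "3 * \<epsilon> / 4 < pvar_sum p x n \<tau>" by blast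
  have n0: "0 < n" using part_pos[OF P cd(2)] .
  then obtain m where nm: "n = Suc m" by (cases n) auto
  have t01: "\<tau> 0 = c" "c < \<tau> 1" using P n0 by (auto simp: partition_of_def)
  have t1d: "\<tau> 1 \<le> d" using part_range[OF P, of 1] n0 by simp
  obtain \<delta> where \<delta>: "\<delta> > 0" "\<forall>r\<in>{a..b}. \<bar>r - c\<bar> < \<delta> \<longrightarrow>
       norm (x (\<tau> 1) - x c) powr p - \<epsilon>/4 < norm (x (\<tau> 1) - x r) powr p"
    using near_point[OF xc _ p, of c "\<epsilon>/4" "\<tau> 1"] cd \<epsilon> by auto
  define \<mu> where "\<mu> = min \<delta> (\<tau> 1 - c)"
  have mm: "0 < \<mu>" "\<mu> \<le> \<delta>" "\<mu> \<le> \<tau> 1 - c"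
    using \<delta> t01 unfolding \<mu>_def by auto
  define r where "r = c + \<mu> / 2"
  have r1a: "c < r" using mm unfolding r_def by linarith
  have r1b: "r < \<tau> 1" using mm unfolding r_def by linarith
  have r1c: "r - c < \<delta>" using mm unfolding r_def by linarith
  note r1 = r1a r1b r1c
  have r: "c < r" "r < \<tau> 1" "\<bar>r - c\<bar> < \<delta>" "r \<in> {a..b}"
    using r1 t1d cd by auto
  define \<tau>' where "\<tau>' = \<tau>(0 := r)"
  have P': "partition_of r d n \<tau>'"
    using P r n0 unfolding \<tau>'_def partition_of_def by (auto simp: nm)
  have "pvar_sum p x n \<tau> = norm (x (\<tau> 1) - x c) powr p + (\<Sum>i<m. norm (x (\<tau> (Suc (Suc i))) - x (\<tau> (Suc i))) powr p)"
    unfolding pvar_sum_def nm sum.lessThan_Suc_shift using t01 by simp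
  moreover have "pvar_sum p x n \<tau>' = norm (x (\<tau> 1) - x r) powr p + (\<Sum>i<m. norm (x (\<tau> (Suc (Suc i))) - x (\<tau> (Suc i))) powr p)"
    unfolding pvar_sum_def nm sum.lessThan_Suc_shift \<tau>'_def by simp
  moreover have "norm (x (\<tau> 1) - x c) powr p - \<epsilon>/4 < norm (x (\<tau> 1) - x r) powr p"
    using \<delta>(2) r by blast
  ultimately have "\<epsilon>/2 < pvar_sum p x n \<tau>'" using S by simp
  moreover have "pvar_sum p x n \<tau>' \<le> om p x r d"
    by (rule om_upper[OF finite_pvar_sub[OF fp] P']) (use r cd in auto)
  ultimately show ?thesis using r t1d by (intro exI[of _ r]) auto
qed

lemma om_ge_step_left:
  fixes x :: "real \<Rightarrow> 'a::real_normed_vector"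
  assumes xc: "continuous_on {a..b} x" and fp: "finite_pvar p x a b" and p: "0 < p"
    and cd: "a \<le> d" "d < c" "c \<le> b" and big: "\<epsilon> \<le> om p x d c" and \<epsilon>: "0 < \<epsilon>"
  shows "\<exists>d'. d < d' \<and> d' < c \<and> \<epsilon>/2 \<le> om p x d d'"
proof -
  have ne: "{pvar_sum p x n \<tau> |n \<tau>. partition_of d c n \<tau>} \<noteq> {}" using part_exists[of d c] cd by auto
  have "3 * \<epsilon> / 4 < om p x d c" using big \<epsilon> by simp
  then obtain z where "z \<in> {pvar_sum p x n \<tau> |n \<tau>. partition_of d c n \<tau>}" "3 * \<epsilon> / 4 < z"
    unfolding om_def using less_cSupE[OF _ ne] by blast
  then obtain n \<tau> where P: "partition_of d c n \<tau>" and S: "3 * \<epsilon> / 4 < pvar_sum p x n \<tau>" by blast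
  have n0: "0 < n" using part_pos[OF P cd(2)] .
  then obtain m where nm: "n = Suc m" by (cases n) auto
  have tm: "\<tau> (Suc m) = c" "\<tau> m < c" using P nm by (auto simp: partition_of_def)
  have dtm: "d \<le> \<tau> m" using part_range[OF P, of m] nm by simp
  obtain \<delta> where \<delta>: "\<delta> > 0" "\<forall>r\<in>{a..b}. \<bar>r - c\<bar> < \<delta> \<longrightarrow>
       norm (x (\<tau> m) - x c) powr p - \<epsilon>/4 < norm (x (\<tau> m) - x r) powr p"
    using near_point[OF xc _ p, of c "\<epsilon>/4" "\<tau> m"] cd \<epsilon> by auto
  define \<mu> where "\<mu> = min \<delta> (c - \<tau> m)"
  have mm: "0 < \<mu>" "\<mu> \<le> \<delta>" "\<mu> \<le> c - \<tau> m"
    using \<delta> tm unfolding \<mu>_def by auto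
  define r where "r = c - \<mu> / 2"
  have r1a: "r < c" using mm unfolding r_def by linarith
  have r1b: "\<tau> m < r" using mm unfolding r_def by linarith
  have r1c: "c - r < \<delta>" using mm unfolding r_def by linarith
  have r: "r < c" "\<tau> m < r" "\<bar>r - c\<bar> < \<delta>" "r \<in> {a..b}"
    using r1a r1b r1c dtm cd by auto
  define \<tau>' where "\<tau>' = \<tau>(Suc m := r)"
  have P': "partition_of d r n \<tau>'"
    using P r unfolding \<tau>'_def partition_of_def by (auto simp: nm less_Suc_eq)
  have "pvar_sum p x n \<tau> = (\<Sum>i<m. norm (x (\<tau> (Suc i)) - x (\<tau> i)) powr p) + norm (x c - x (\<tau> m)) powr p"
    unfolding pvar_sum_def nm using tm by simp
  moreover have "pvar_sum p x n \<tau>' = (\<Sum>i<m. norm (x (\<tau> (Suc i)) - x (\<tau> i)) powr p) + norm (x r - x (\<tau> m)) powr p"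
    unfolding pvar_sum_def nm \<tau>'_def by simp
  moreover have "norm (x (\<tau> m) - x c) powr p - \<epsilon>/4 < norm (x (\<tau> m) - x r) powr p"
    using \<delta>(2) r by blast
  ultimately have "\<epsilon>/2 < pvar_sum p x n \<tau>'" using S by (simp add: norm_minus_commute)
  moreover have "pvar_sum p x n \<tau>' \<le> om p x d r"
    by (rule om_upper[OF finite_pvar_sub[OF fp] P']) (use r cd in auto)
  ultimately show ?thesis using r dtm by (intro exI[of _ r]) auto
qed

lemma om_right_cont:
  fixes x :: "real \<Rightarrow> 'a::real_normed_vector"
  assumes xc: "continuous_on {a..b} x" and fp: "finite_pvar p x a b" and p: "0 < p"
    and c: "a \<le> c" "c \<le> b" and \<epsilon>: "0 < \<epsilon>"
  shows "\<exists>\<delta>>0. \<forall>d. c \<le> d \<longrightarrow> d \<le> b \<longrightarrow> d < c + \<delta> \<longrightarrow> om p x c d < \<epsilon>"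
proof (rule ccontr)
  assume "\<not> ?thesis"
  then have nt: "\<And>\<delta>. \<delta> > 0 \<Longrightarrow> \<exists>d. c \<le> d \<and> d \<le> b \<and> d < c + \<delta> \<and> \<epsilon> \<le> om p x c d"
    by (meson not_less)
  have H: "\<epsilon> \<le> om p x c d" if dd: "c < d" "d \<le> b" for d
  proof -
    obtain d' where d': "c \<le> d'" "d' \<le> b" "d' < d" "\<epsilon> \<le> om p x c d'" using nt[of "d - c"] dd by auto
    have "om p x c d' \<le> om p x c d"
      by (rule om_mono[OF finite_pvar_sub[OF fp]]) (use c dd d' in auto)
    then show ?thesis using d' by simp
  qed
  obtain b0 where b0': "c \<le> b0" "b0 \<le> b" "\<epsilon> \<le> om p x c b0" using nt[of 1] by auto
  have b0: "c < b0" using b0' \<epsilon> om_refl[of p x c] by (cases "c = b0") auto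
  have step: "\<forall>d. \<exists>d'. c < d \<and> d \<le> b \<longrightarrow> c < d' \<and> d' < d \<and> \<epsilon>/2 \<le> om p x d' d"
  proof
    fix d show "\<exists>d'. c < d \<and> d \<le> b \<longrightarrow> c < d' \<and> d' < d \<and> \<epsilon>/2 \<le> om p x d' d"
    proof (cases "c < d \<and> d \<le> b")
      case True
      then show ?thesis using om_ge_step_right[OF xc fp p c(1) _ _ H \<epsilon>, of d] by auto
    qed auto
  qed
  obtain G where G: "\<And>d. c < d \<Longrightarrow> d \<le> b \<Longrightarrow> c < G d \<and> G d < d \<and> \<epsilon>/2 \<le> om p x (G d) d"
    using choice[OF step] by blast
  define D where "D = (\<lambda>k. (G ^^ k) b0)"
  have Dk: "c < D k \<and> D k \<le> b0 \<and> real k * (\<epsilon>/2) \<le> om p x (D k) b0" for k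
  proof (induction k)
    case 0 then show ?case using b0 om_refl[of p x b0] by (simp add: D_def)
  next
    case (Suc k)
    have DS: "D (Suc k) = G (D k)" by (simp add: D_def)
    have g: "c < G (D k)" "G (D k) < D k" "\<epsilon>/2 \<le> om p x (G (D k)) (D k)"
      using G[of "D k"] Suc b0' by auto
    have "om p x (G (D k)) (D k) + om p x (D k) b0 \<le> om p x (G (D k)) b0"
      by (rule om_superadd[OF finite_pvar_sub[OF fp]]) (use g Suc c b0' in auto)
    then show ?case unfolding DS using g Suc by (simp add: algebra_simps)
  qed
  obtain k :: nat where k: "om p x c b0 / (\<epsilon>/2) < real k" using reals_Archimedean2 by blast
  have "om p x (D k) b0 \<le> om p x c b0"
    by (rule om_mono[OF finite_pvar_sub[OF fp]]) (use Dk[of k] c b0' in auto)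
  then have "real k * (\<epsilon>/2) \<le> om p x c b0" using Dk[of k] by simp
  then show False using k \<epsilon> by (simp add: field_simps)
qed

lemma om_left_cont:
  fixes x :: "real \<Rightarrow> 'a::real_normed_vector"
  assumes xc: "continuous_on {a..b} x" and fp: "finite_pvar p x a b" and p: "0 < p"
    and c: "a \<le> c" "c \<le> b" and \<epsilon>: "0 < \<epsilon>"
  shows "\<exists>\<delta>>0. \<forall>d. a \<le> d \<longrightarrow> d \<le> c \<longrightarrow> c - \<delta> < d \<longrightarrow> om p x d c < \<epsilon>"
proof (rule ccontr)
  assume "\<not> ?thesis"
  then have nt: "\<And>\<delta>. \<delta> > 0 \<Longrightarrow> \<exists>d. a \<le> d \<and> d \<le> c \<and> c - \<delta> < d \<and> \<epsilon> \<le> om p x d c"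
    by (meson not_less)
  have H: "\<epsilon> \<le> om p x d c" if dd: "a \<le> d" "d < c" for d
  proof -
    obtain d' where d': "a \<le> d'" "d' \<le> c" "d < d'" "\<epsilon> \<le> om p x d' c" using nt[of "c - d"] dd by auto
    have "om p x d' c \<le> om p x d c"
      by (rule om_mono[OF finite_pvar_sub[OF fp]]) (use c dd d' in auto)
    then show ?thesis using d' by simp
  qed
  obtain a0 where a0': "a \<le> a0" "a0 \<le> c" "\<epsilon> \<le> om p x a0 c" using nt[of 1] by auto
  have a0: "a0 < c" using a0' \<epsilon> om_refl[of p x c] by (cases "c = a0") auto
  have step: "\<forall>d. \<exists>d'. a \<le> d \<and> d < c \<longrightarrow> d < d' \<and> d' < c \<and> \<epsilon>/2 \<le> om p x d d'"
  proof
    fix d show "\<exists>d'. a \<le> d \<and> d < c \<longrightarrow> d < d' \<and> d' < c \<and> \<epsilon>/2 \<le> om p x d d'"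
    proof (cases "a \<le> d \<and> d < c")
      case True
      then show ?thesis using om_ge_step_left[OF xc fp p _ _ c(2) H \<epsilon>, of d] by auto
    qed auto
  qed
  obtain G where G: "\<And>d. a \<le> d \<Longrightarrow> d < c \<Longrightarrow> d < G d \<and> G d < c \<and> \<epsilon>/2 \<le> om p x d (G d)"
    using choice[OF step] by blast
  define D where "D = (\<lambda>k. (G ^^ k) a0)"
  have Dk: "a0 \<le> D k \<and> D k < c \<and> real k * (\<epsilon>/2) \<le> om p x a0 (D k)" for k
  proof (induction k)
    case 0 then show ?case using a0 om_refl[of p x a0] by (simp add: D_def)
  next
    case (Suc k)
    have DS: "D (Suc k) = G (D k)" by (simp add: D_def)
    have g: "D k < G (D k)" "G (D k) < c" "\<epsilon>/2 \<le> om p x (D k) (G (D k))"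
      using G[of "D k"] Suc a0' by auto
    have "om p x a0 (D k) + om p x (D k) (G (D k)) \<le> om p x a0 (G (D k))"
      by (rule om_superadd[OF finite_pvar_sub[OF fp]]) (use g Suc c a0' in auto)
    then show ?case unfolding DS using g Suc by (simp add: algebra_simps)
  qed
  obtain k :: nat where k: "om p x a0 c / (\<epsilon>/2) < real k" using reals_Archimedean2 by blast
  have "om p x a0 (D k) \<le> om p x a0 c"
    by (rule om_mono[OF finite_pvar_sub[OF fp]]) (use Dk[of k] c a0' in auto)
  then have "real k * (\<epsilon>/2) \<le> om p x a0 c" using Dk[of k] by simp
  then show False using k \<epsilon> by (simp add: field_simps)
qed




lemma pvar_semi_refl: "pvar_semi p x s s = 0"
  by (simp add: pvar_semi_om om_refl)

lemma pvar_semi_mono: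
  assumes fp: "finite_pvar p x a b" and p: "0 < p" "a \<le> s" "s \<le> t" "t \<le> t'" "t' \<le> b"
  shows "pvar_semi p x s t \<le> pvar_semi p x s t'"
proof -
  have "om p x s t \<le> om p x s t'"
    by (rule om_mono[OF finite_pvar_sub[OF fp]]) (use p in auto)
  moreover have "0 \<le> om p x s t" by (rule om_nonneg[OF finite_pvar_sub[OF fp]]) (use p in auto)
  ultimately show ?thesis unfolding pvar_semi_om using p by (intro powr_mono2) auto
qed

lemma pvar_cont:
  fixes x :: "real \<Rightarrow> 'a::real_normed_vector"
  assumes xc: "continuous_on {a..b} x" and fp: "finite_pvar p x a b" and p: "1 \<le> p"
    and s: "a \<le> s" "s \<le> b"
  shows "continuous_on {s..b} (\<lambda>t. pvar_semi p x s t)"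
  unfolding continuous_on_iff
proof (intro ballI allI impI)
  fix t0 e :: real assume t0: "t0 \<in> {s..b}" and e: "0 < e"
  have p0: "0 < p" using p by simp
  define E where "E = e powr p"
  have E: "0 < E" unfolding E_def using e by simp
  have Ee: "E powr (1/p) = e" unfolding E_def using e p by (simp add: powr_powr)
  obtain \<delta>1 where \<delta>1: "\<delta>1 > 0" "\<forall>d. t0 \<le> d \<longrightarrow> d \<le> b \<longrightarrow> d < t0 + \<delta>1 \<longrightarrow> om p x t0 d < E"
    using om_right_cont[OF xc fp p0 _ _ E, of t0] t0 s by auto
  obtain \<delta>2 where \<delta>2: "\<delta>2 > 0" "\<forall>d. a \<le> d \<longrightarrow> d \<le> t0 \<longrightarrow> t0 - \<delta>2 < d \<longrightarrow> om p x d t0 < E"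
    using om_left_cont[OF xc fp p0 _ _ E, of t0] t0 s by auto
  have small: "om p x u v powr (1/p) < e" if "om p x u v < E" "a \<le> u" "u \<le> v" "v \<le> b" for u v
  proof -
    have "0 \<le> om p x u v" by (rule om_nonneg[OF finite_pvar_sub[OF fp]]) (use that in auto)
    then have "om p x u v powr (1/p) < E powr (1/p)" using that p by (intro powr_less_mono2) auto
    then show ?thesis using Ee by simp
  qed
  show "\<exists>\<delta>>0. \<forall>t\<in>{s..b}. dist t t0 < \<delta> \<longrightarrow> dist (pvar_semi p x s t) (pvar_semi p x s t0) < e"
  proof (intro exI[of _ "min \<delta>1 \<delta>2"] conjI ballI impI)
    show "0 < min \<delta>1 \<delta>2" using \<delta>1 \<delta>2 by simp
    fix t assume t: "t \<in> {s..b}" "dist t t0 < min \<delta>1 \<delta>2"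
    show "dist (pvar_semi p x s t) (pvar_semi p x s t0) < e"
    proof (cases "t0 \<le> t")
      case True
      have m: "pvar_semi p x s t0 \<le> pvar_semi p x s t"
        by (rule pvar_semi_mono[OF fp p0]) (use t t0 s True in auto)
      have tr: "pvar_semi p x s t \<le> pvar_semi p x s t0 + om p x t0 t powr (1/p)"
        unfolding pvar_semi_om by (rule om_triangle[OF p finite_pvar_sub[OF fp]]) (use t t0 s True in auto)
      have "om p x t0 t < E" using \<delta>1(2) t True by (auto simp: dist_real_def)
      then have "om p x t0 t powr (1/p) < e" using small t t0 s True by auto
      then show ?thesis using m tr by (simp add: dist_real_def)
    next
      case False
      have m: "pvar_semi p x s t \<le> pvar_semi p x s t0"
        by (rule pvar_semi_mono[OF fp p0]) (use t t0 s False in auto)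
      have tr: "pvar_semi p x s t0 \<le> pvar_semi p x s t + om p x t t0 powr (1/p)"
        unfolding pvar_semi_om by (rule om_triangle[OF p finite_pvar_sub[OF fp]]) (use t t0 s False in auto)
      have "om p x t t0 < E" using \<delta>2(2) t False s by (auto simp: dist_real_def)
      then have "om p x t t0 powr (1/p) < e" using small t t0 s False by auto
      then show ?thesis using m tr by (simp add: dist_real_def)
    qed
  qed
qed

lemma greedy_step:
  fixes x :: "real \<Rightarrow> 'a::real_normed_vector"
  assumes xc: "continuous_on {a..b} x" and fp: "finite_pvar p x a b" and p: "1 \<le> p"
    and s: "a \<le> s" "s \<le> b" and \<gamma>: "0 < \<gamma>"
  defines "S \<equiv> {t. s < t \<and> t \<le> b \<and> pvar_semi p x s t = \<gamma>}"
  defines "T \<equiv> (if S = {} then b else min (Inf S) b)"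
  shows "s \<le> T" "T \<le> b" "pvar_semi p x s T \<le> \<gamma>" "T = b \<or> pvar_semi p x s T = \<gamma>"
proof -
  have cont: "continuous_on {s..b} (\<lambda>t. pvar_semi p x s t)" by (rule pvar_cont[OF xc fp p s])
  have r0: "pvar_semi p x s s = 0" by (rule pvar_semi_refl)
  have "(s \<le> T \<and> T \<le> b \<and> pvar_semi p x s T \<le> \<gamma>) \<and> (T = b \<or> pvar_semi p x s T = \<gamma>)"
  proof (cases "S = {}")
    case True
    then have T: "T = b" unfolding T_def by simp
    have "pvar_semi p x s b \<le> \<gamma>"
    proof (rule ccontr)
      assume "\<not> ?thesis"
      then have "\<gamma> \<le> pvar_semi p x s b" by simp
      then obtain t where t: "s \<le> t" "t \<le> b" "pvar_semi p x s t = \<gamma>"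
        using IVT'[of "\<lambda>t. pvar_semi p x s t" s \<gamma> b] r0 \<gamma> s cont by auto
      have "t \<noteq> s" using t r0 \<gamma> by auto
      then have "t \<in> S" unfolding S_def using t by auto
      then show False using True by simp
    qed
    then show ?thesis using T s by simp
  next
    case False
    have SS: "S = {t \<in> {s..b}. pvar_semi p x s t = \<gamma>}"
      unfolding S_def using r0 \<gamma> by (auto simp: order_le_less)
    have "closed S" unfolding SS by (rule continuous_closed_preimage_constant[OF cont]) simp
    moreover have "bdd_below S" unfolding S_def bdd_below_def by (auto intro: less_imp_le)
    ultimately have "Inf S \<in> S" using False closed_contains_Inf by blast
    then have I: "s < Inf S" "Inf S \<le> b" "pvar_semi p x s (Inf S) = \<gamma>" unfolding S_def by auto
    then have T: "T = Inf S" unfolding T_def using False by simp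
    show ?thesis using I T by simp
  qed
  then show "s \<le> T" "T \<le> b" "pvar_semi p x s T \<le> \<gamma>" "T = b \<or> pvar_semi p x s T = \<gamma>" by auto
qed




lemma greedy_props:
  fixes x :: "real \<Rightarrow> 'a::real_normed_vector"
  assumes xc: "continuous_on {a..b} x" and fp: "finite_pvar p x a b" and p: "1 \<le> p"
    and ab: "a \<le> b" and \<gamma>: "0 < \<gamma>"
  defines "\<tau> \<equiv> greedy_tau p x a b \<gamma>"
  shows "\<And>k. a \<le> \<tau> k \<and> \<tau> k \<le> b" "\<And>k. \<tau> k \<le> \<tau> (Suc k)"
    "\<And>k. pvar_semi p x (\<tau> k) (\<tau> (Suc k)) \<le> \<gamma>"
    "1 \<le> greedy_N p x a b \<gamma> \<and> \<tau> (greedy_N p x a b \<gamma>) = b"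
proof -
  have tS: "\<tau> (Suc k) = (if {t. \<tau> k < t \<and> t \<le> b \<and> pvar_semi p x (\<tau> k) t = \<gamma>} = {} then b
      else min (Inf {t. \<tau> k < t \<and> t \<le> b \<and> pvar_semi p x (\<tau> k) t = \<gamma>}) b)" for k
    unfolding \<tau>_def by (simp add: Let_def)
  have rng: "a \<le> \<tau> k \<and> \<tau> k \<le> b" for k
  proof (induction k)
    case 0 then show ?case using ab by (simp add: \<tau>_def)
  next
    case (Suc k)
    show ?case using greedy_step(1,2)[OF xc fp p _ _ \<gamma>, of "\<tau> k"] Suc unfolding tS[of k] by auto
  qed
  show "\<And>k. a \<le> \<tau> k \<and> \<tau> k \<le> b" by (rule rng)
  have st: "\<tau> k \<le> \<tau> (Suc k)" "pvar_semi p x (\<tau> k) (\<tau> (Suc k)) \<le> \<gamma>"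
      "\<tau> (Suc k) = b \<or> pvar_semi p x (\<tau> k) (\<tau> (Suc k)) = \<gamma>" for k
    using greedy_step[OF xc fp p _ _ \<gamma>, of "\<tau> k"] rng[of k] unfolding tS[of k] by auto
  show "\<And>k. \<tau> k \<le> \<tau> (Suc k)" "\<And>k. pvar_semi p x (\<tau> k) (\<tau> (Suc k)) \<le> \<gamma>" using st by auto
  have fin: "\<And>u v. a \<le> u \<Longrightarrow> v \<le> b \<Longrightarrow> finite_pvar p x u v" using finite_pvar_sub[OF fp] by blast
  have prog: "\<tau> k = b \<or> real k * \<gamma> powr p \<le> om p x a (\<tau> k)" for k
  proof (induction k)
    case 0 then show ?case by (simp add: \<tau>_def om_refl)
  next
    case (Suc k)
    show ?case
    proof (cases "\<tau> k = b")
      case True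
      then show ?thesis using st(1)[of k] rng[of "Suc k"] by auto
    next
      case False
      then have IH: "real k * \<gamma> powr p \<le> om p x a (\<tau> k)" using Suc by simp
      show ?thesis
      proof (cases "\<tau> (Suc k) = b")
        case True then show ?thesis by simp
      next
        case False
        then have e: "pvar_semi p x (\<tau> k) (\<tau> (Suc k)) = \<gamma>" using st(3)[of k] by simp
        have o0: "0 \<le> om p x (\<tau> k) (\<tau> (Suc k))"
          by (rule om_nonneg[OF fin]) (use rng st in auto)
        have "om p x (\<tau> k) (\<tau> (Suc k)) = (pvar_semi p x (\<tau> k) (\<tau> (Suc k))) powr p"
          unfolding pvar_semi_om using o0 p by (simp add: powr_powr)
        then have g: "om p x (\<tau> k) (\<tau> (Suc k)) = \<gamma> powr p" using e by simp
        have "om p x a (\<tau> k) + om p x (\<tau> k) (\<tau> (Suc k)) \<le> om p x a (\<tau> (Suc k))"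
          by (rule om_superadd[OF fin]) (use rng st in auto)
        then show ?thesis using IH g by (simp add: algebra_simps)
      qed
    qed
  qed
  have gp: "0 < \<gamma> powr p" using \<gamma> by simp
  obtain k :: nat where k: "om p x a b / \<gamma> powr p < real k" using reals_Archimedean2 by blast
  define k' where "k' = max k 1"
  have "\<tau> k' = b"
  proof (rule ccontr)
    assume "\<tau> k' \<noteq> b"
    then have "real k' * \<gamma> powr p \<le> om p x a (\<tau> k')" using prog[of k'] by simp
    also have "\<dots> \<le> om p x a b" by (rule om_mono[OF fp]) (use rng[of k'] in auto)
    finally have "real k' \<le> om p x a b / \<gamma> powr p" using gp by (simp add: field_simps)
    moreover have "real k \<le> real k'" unfolding k'_def by simp
    ultimately show False using k by simp
  qed
  then have ex: "\<exists>k. 1 \<le> k \<and> \<tau> k = b" unfolding k'_def by (intro exI[of _ "max k 1"]) auto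
  show "1 \<le> greedy_N p x a b \<gamma> \<and> \<tau> (greedy_N p x a b \<gamma>) = b"
    unfolding greedy_N_def \<tau>_def[symmetric] using LeastI_ex[OF ex] .
qed




lemma gronwall:
  fixes u :: "real \<Rightarrow> real"
  assumes ab: "a \<le> b" and L: "0 < L" and c: "0 \<le> c"
    and uc: "continuous_on {a..b} u"
    and le: "\<And>t. t \<in> {a..b} \<Longrightarrow> u t \<le> \<Phi> + 2 * integral {a..t} (\<lambda>s. L * u s + c)"
  shows "\<Phi> + 2 * integral {a..b} (\<lambda>s. L * u s + c) + c / L \<le> (\<Phi> + c / L) * exp (2 * L * (b - a))"
proof -
  define k where "k = (\<lambda>s. L * u s + c)"
  have kc: "continuous_on {a..b} k" unfolding k_def by (intro continuous_intros uc)
  define H where "H = (\<lambda>t. (\<Phi> + 2 * integral {a..t} k + c / L) * exp (-(2 * L) * (t - a)))"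
  define H' where "H' = (\<lambda>t. (2 * k t) * exp (-(2 * L) * (t - a))
      + (\<Phi> + 2 * integral {a..t} k + c / L) * (exp (-(2 * L) * (t - a)) * (-(2 * L))))"
  have D: "(H has_real_derivative H' t) (at t within {a..b})" if t: "t \<in> {a..b}" for t
  proof -
    have d0: "((\<lambda>t. integral {a..t} k) has_real_derivative k t) (at t within {a..b})"
      by (rule integral_has_real_derivative[OF kc t])
    have d1: "((\<lambda>t. \<Phi> + 2 * integral {a..t} k + c / L) has_real_derivative (2 * k t)) (at t within {a..b})"
      using DERIV_add[OF DERIV_add[OF DERIV_const DERIV_cmult[OF d0, of 2]] DERIV_const, of \<Phi> "c/L"] by simp
    have d2: "((\<lambda>t. exp (-(2 * L) * (t - a))) has_real_derivative exp (-(2 * L) * (t - a)) * (-(2 * L))) (at t within {a..b})"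
      by (rule derivative_eq_intros | simp)+
    show ?thesis unfolding H_def H'_def by (rule DERIV_cong[OF DERIV_mult[OF d1 d2]]) (simp add: algebra_simps)
  qed
  have Hn: "H' t \<le> 0" if t: "t \<in> {a..b}" for t
  proof -
    have "H' t = 2 * L * (u t - (\<Phi> + 2 * integral {a..t} k)) * exp (-(2 * L) * (t - a))"
      unfolding H'_def k_def using L by (simp add: field_simps)
    moreover have "u t - (\<Phi> + 2 * integral {a..t} k) \<le> 0" using le[OF t] unfolding k_def by simp
    ultimately show ?thesis using L by (simp add: mult_nonneg_nonpos mult_nonpos_nonneg)
  qed
  have D': "\<And>t. a \<le> t \<Longrightarrow> t \<le> b \<Longrightarrow> (H has_derivative (\<lambda>h. H' t * h)) (at t within {a..b})"
    using D unfolding has_field_derivative_def by auto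
  obtain \<xi> where \<xi>: "\<xi> \<in> {a..b}" "H b - H a = H' \<xi> * (b - a)"
    using mvt_very_simple[OF ab D'] by blast
  have "H' \<xi> * (b - a) \<le> 0" using Hn[OF \<xi>(1)] ab by (simp add: mult_nonpos_nonneg)
  then have "H b \<le> H a" using \<xi>(2) by simp
  then have h1: "(\<Phi> + 2 * integral {a..b} k + c / L) * exp (-(2 * L) * (b - a)) \<le> \<Phi> + c / L"
    unfolding H_def by simp
  define X where "X = \<Phi> + 2 * integral {a..b} k + c / L"
  define E where "E = exp (2 * L * (b - a))"
  have e1: "exp (-(2 * L) * (b - a)) = exp (- (2 * L * (b - a)))" by simp
  have E: "0 < E" "exp (-(2 * L) * (b - a)) = 1 / E" unfolding E_def e1 exp_minus by (auto simp: divide_inverse)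
  have "X / E \<le> \<Phi> + c / L" using h1 unfolding X_def[symmetric] E(2) by simp
  then have "X \<le> (\<Phi> + c / L) * E" using E(1) by (simp add: field_simps)
  then show ?thesis unfolding X_def E_def k_def .
qed




lemma incr_le_om:
  assumes "finite_pvar p z s t" "s \<le> t" "0 < p"
  shows "norm (z t - z s) \<le> om p z s t powr (1/p)"
proof -
  have "norm (z t - z s) powr p \<le> om p z s t" by (rule om_incr[OF assms(1,2)])
  then have "(norm (z t - z s) powr p) powr (1/p) \<le> om p z s t powr (1/p)"
    using assms by (intro powr_mono2) auto
  then show ?thesis using assms by (simp add: powr_powr)
qed

context
  fixes p a b Cf Cg :: real
    and A :: "real^'d^'d"
    and f :: "real^'d \<Rightarrow> real^'d"
    and g :: "real^'d \<Rightarrow> real^'m^'d"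
    and x :: "real \<Rightarrow> real^'m"
    and y :: "real \<Rightarrow> real^'d"
  assumes p: "1 < p" "p < 2"
    and ab: "a \<le> b"
    and Cf: "Cf > 0" "\<And>u v. norm (f u - f v) \<le> Cf * norm (u - v)"
    and Cg: "Cg > 0" "\<And>u v. onorm (\<lambda>w. (g u - g v) *v w) \<le> Cg * norm (u - v)"
    and g_bdd: "bdd_above (range (\<lambda>u. onorm (\<lambda>w. g u *v w)))"
    and x_cont: "continuous_on {a..b} x" and x_pvar: "finite_pvar p x a b"
    and y_cont: "continuous_on {a..b} y" and y_pvar: "finite_pvar p y a b"
    and y_sol: "\<forall>t\<in>{a..b}. \<exists>I. has_young_integral (\<lambda>s. g (y s)) x a t I
                  \<and> y t = y a + integral {a..t} (\<lambda>s. A *v y s + f (y s)) + I"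
begin

lemma gs_facts:
  shows "0 \<le> (SUP u. onorm (\<lambda>w. g u *v w))"
    and "norm (g u *v w) \<le> (SUP u. onorm (\<lambda>w. g u *v w)) * norm w"
proof -
  have le: "onorm (\<lambda>w. g u *v w) \<le> (SUP u. onorm (\<lambda>w. g u *v w))" for u
    by (rule cSUP_upper[OF UNIV_I g_bdd])
  show "0 \<le> (SUP u. onorm (\<lambda>w. g u *v w))"
    using le[of u] onorm_pos_le[of "\<lambda>w. g u *v w"] by simp
  have "norm (g u *v w) \<le> onorm (\<lambda>w. g u *v w) * norm w" by (rule onorm) simp
  also have "\<dots> \<le> (SUP u. onorm (\<lambda>w. g u *v w)) * norm w" by (intro mult_right_mono le) simp
  finally show "norm (g u *v w) \<le> (SUP u. onorm (\<lambda>w. g u *v w)) * norm w" .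
qed

lemma f_cont: "continuous_on S f"
proof -
  have "Cf-lipschitz_on S f"
    by (rule lipschitz_onI) (use Cf in \<open>auto simp: dist_norm\<close>)
  then show ?thesis by (rule lipschitz_on_continuous_on)
qed

lemma drift_cont: "continuous_on {a..b} (\<lambda>s. A *v y s + f (y s))"
proof -
  have "continuous_on {a..b} (\<lambda>s. A *v y s)"
    using continuous_on_compose[OF y_cont linear_continuous_on[OF matrix_vector_mul_bounded_linear[of A]]]
    by (simp add: o_def)
  moreover have "continuous_on {a..b} (\<lambda>s. f (y s))"
    using continuous_on_compose[OF y_cont f_cont] by (simp add: o_def)
  ultimately show ?thesis by (intro continuous_on_add)
qed

lemma h_cont: "continuous_on {a..b} (\<lambda>s. (onorm (\<lambda>v. A *v v) + Cf) * norm (y s) + norm (f 0))"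
  by (intro continuous_intros y_cont)

lemma drift_bound: "norm (A *v v + f v) \<le> (onorm (\<lambda>v. A *v v) + Cf) * norm v + norm (f 0)"
proof -
  have "norm (A *v v) \<le> onorm (\<lambda>v. A *v v) * norm v" by (rule onorm) simp
  moreover have "norm (f v) \<le> Cf * norm v + norm (f 0)"
    using Cf(2)[of v 0] norm_triangle_ineq[of "f v - f 0" "f 0"] by simp
  ultimately show ?thesis using norm_triangle_ineq[of "A *v v" "f v"] by (simp add: algebra_simps)
qed

lemma young_incr_y:
  assumes uv: "a \<le> u" "u \<le> v" "v \<le> b"
  shows "norm (y v - y u) \<le> integral {u..v} (\<lambda>s. (onorm (\<lambda>v. A *v v) + Cf) * norm (y s) + norm (f 0))
     + (SUP u. onorm (\<lambda>w. g u *v w)) * norm (x v - x u)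
     + K_const p * Cg * om p y u v powr (1/p) * om p x u v powr (1/p)"
proof -
  have p0: "0 < p" using p by simp
  obtain Iu where Iu: "has_young_integral (\<lambda>s. g (y s)) x a u Iu"
     "y u = y a + integral {a..u} (\<lambda>s. A *v y s + f (y s)) + Iu"
    using y_sol[rule_format, of u] uv by auto
  obtain Iv where Iv: "has_young_integral (\<lambda>s. g (y s)) x a v Iv"
     "y v = y a + integral {a..v} (\<lambda>s. A *v y s + f (y s)) + Iv"
    using y_sol[rule_format, of v] uv by auto
  have fin: "\<And>s t. a \<le> s \<Longrightarrow> t \<le> b \<Longrightarrow> finite_pvar p y s t" "\<And>s t. a \<le> s \<Longrightarrow> t \<le> b \<Longrightarrow> finite_pvar p x s t"
    using finite_pvar_sub[OF y_pvar] finite_pvar_sub[OF x_pvar] by blast+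
  define M where "M = K_const p * Cg * om p y u v powr (1/p) * om p x u v powr (1/p)"
  have bd: "norm (RS (\<lambda>s. g (y s)) x n \<tau> - g (y u) *v (x v - x u)) \<le> M" if P: "partition_of u v n \<tau>" for n \<tau>
  proof -
    have Cgp: "(Cg powr p) powr (1/p) = Cg" using Cg p by (simp add: powr_powr)
    have "norm (RS (\<lambda>s. g (y s)) x n \<tau> - g (y u) *v (x v - x u))
       \<le> cc p n * ((Cg powr p * om p y u v) * om p x u v) powr (1/p)"
    proof (rule YL_partition[OF p0 _ _ _ _ _ _ P])
      fix u' v' w' assume h: "u \<le> u'" "u' \<le> v'" "v' \<le> w'" "w' \<le> v"
      show "Cg powr p * om p y u' v' + Cg powr p * om p y v' w' \<le> Cg powr p * om p y u' w'"
        using mult_left_mono[OF om_superadd[OF fin(1), of u' w' v'], of "Cg powr p"] h uv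
        by (simp add: distrib_left)
      show "om p x u' v' + om p x v' w' \<le> om p x u' w'"
        using om_superadd[OF fin(2), of u' w' v'] h uv by simp
    next
      fix u' v' assume h: "u \<le> u'" "u' \<le> v'" "v' \<le> v"
      show "0 \<le> Cg powr p * om p y u' v'" using om_nonneg[OF fin(1), of u' v'] h uv by simp
      show "0 \<le> om p x u' v'" using om_nonneg[OF fin(2), of u' v'] h uv by simp
      have "onorm (\<lambda>w. (g (y v') - g (y u')) *v w) \<le> Cg * norm (y v' - y u')" by (rule Cg(2))
      also have "\<dots> \<le> Cg * om p y u' v' powr (1/p)"
        using incr_le_om[OF fin(1) _ p0, of u' v'] h uv Cg by (intro mult_left_mono) auto
      also have "\<dots> = (Cg powr p * om p y u' v') powr (1/p)"
        using om_nonneg[OF fin(1), of u' v'] h uv Cg Cgp by (simp add: powr_mult)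
      finally show "onorm (\<lambda>w. (g (y v') - g (y u')) *v w) \<le> (Cg powr p * om p y u' v') powr (1/p)" .
      show "norm (x v' - x u') \<le> om p x u' v' powr (1/p)"
        using incr_le_om[OF fin(2) _ p0, of u' v'] h uv by auto
    qed
    also have "\<dots> \<le> K_const p * ((Cg powr p * om p y u v) * om p x u v) powr (1/p)"
      by (intro mult_right_mono cc_le_K[OF p]) simp
    also have "((Cg powr p * om p y u v) * om p x u v) powr (1/p) = Cg * om p y u v powr (1/p) * om p x u v powr (1/p)"
      using om_nonneg[OF fin(1), of u v] om_nonneg[OF fin(2), of u v] uv Cg Cgp by (simp add: powr_mult)
    finally show ?thesis unfolding M_def by (simp add: mult.assoc)
  qed
  have yi: "norm (Iv - Iu - g (y u) *v (x v - x u)) \<le> M"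
    by (rule young_incr[OF _ uv(2) Iu(1) Iv(1) bd]) (use uv in auto)
  have int: "(\<lambda>s. A *v y s + f (y s)) integrable_on {a..v}"
    using integrable_continuous_interval continuous_on_subset[OF drift_cont] uv by (meson atLeastatMost_subset_iff order_refl)
  have comb: "integral {a..u} (\<lambda>s. A *v y s + f (y s)) + integral {u..v} (\<lambda>s. A *v y s + f (y s))
      = integral {a..v} (\<lambda>s. A *v y s + f (y s))"
    by (rule Henstock_Kurzweil_Integration.integral_combine[OF uv(1,2) int])
  have yd: "y v - y u = integral {u..v} (\<lambda>s. A *v y s + f (y s)) + (Iv - Iu)"
    using Iu(2) Iv(2) comb by (simp add: algebra_simps)
  have hc: "continuous_on {u..v} (\<lambda>s. (onorm (\<lambda>v. A *v v) + Cf) * norm (y s) + norm (f 0))"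
    using continuous_on_subset[OF h_cont] uv by auto
  have dc: "continuous_on {u..v} (\<lambda>s. A *v y s + f (y s))"
    using continuous_on_subset[OF drift_cont] uv by auto
  have i1: "norm (integral {u..v} (\<lambda>s. A *v y s + f (y s)))
      \<le> integral {u..v} (\<lambda>s. (onorm (\<lambda>v. A *v v) + Cf) * norm (y s) + norm (f 0))"
    by (rule integral_norm_bound_integral[OF integrable_continuous_interval[OF dc] integrable_continuous_interval[OF hc]])
       (rule drift_bound)
  have "norm (Iv - Iu) \<le> M + norm (g (y u) *v (x v - x u))"
    using yi norm_triangle_ineq[of "Iv - Iu - g (y u) *v (x v - x u)" "g (y u) *v (x v - x u)"] by simp
  also have "norm (g (y u) *v (x v - x u)) \<le> (SUP u. onorm (\<lambda>w. g u *v w)) * norm (x v - x u)"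
    by (rule gs_facts(2))
  finally have i2: "norm (Iv - Iu) \<le> M + (SUP u. onorm (\<lambda>w. g u *v w)) * norm (x v - x u)" by simp
  show ?thesis unfolding yd using norm_triangle_ineq[of "integral {u..v} (\<lambda>s. A *v y s + f (y s))" "Iv - Iu"] i1 i2
    unfolding M_def by simp
qed


lemma h_nonneg: "0 \<le> (onorm (\<lambda>v. A *v v) + Cf) * norm (y s) + norm (f 0)"
  using onorm_pos_le[of "\<lambda>v. A *v v"] Cf by simp

lemma int_h_sum:
  assumes P: "partition_of s t n \<tau>" and st: "a \<le> s" "t \<le> b"
  shows "(\<Sum>i<n. integral {\<tau> i..\<tau> (Suc i)} (\<lambda>s. (onorm (\<lambda>v. A *v v) + Cf) * norm (y s) + norm (f 0)))
     = integral {s..t} (\<lambda>s. (onorm (\<lambda>v. A *v v) + Cf) * norm (y s) + norm (f 0))"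
proof -
  define h where "h = (\<lambda>s. (onorm (\<lambda>v. A *v v) + Cf) * norm (y s) + norm (f 0))"
  have "k \<le> n \<Longrightarrow> (\<Sum>i<k. integral {\<tau> i..\<tau> (Suc i)} h) = integral {s..\<tau> k} h" for k
  proof (induction k)
    case 0 then show ?case using P by (simp add: partition_of_def)
  next
    case (Suc k)
    have r: "s \<le> \<tau> k" "\<tau> k \<le> \<tau> (Suc k)" "\<tau> (Suc k) \<le> t"
      using part_range[OF P] part_mono[OF P, of k "Suc k"] Suc.prems by auto
    have int: "h integrable_on {s..\<tau> (Suc k)}"
      unfolding h_def by (rule integrable_continuous_interval[OF continuous_on_subset[OF h_cont]]) (use r st in auto)
    have "integral {s..\<tau> k} h + integral {\<tau> k..\<tau> (Suc k)} h = integral {s..\<tau> (Suc k)} h"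
      by (rule Henstock_Kurzweil_Integration.integral_combine[OF r(1,2) int])
    then show ?case using Suc by simp
  qed
  from this[of n] P show ?thesis unfolding h_def by (simp add: partition_of_def)
qed

lemma K_pos: "0 < K_const p"
proof -
  have "(2::real) powr (1 - 2 / p) < 2 powr 0" using p by (intro powr_less_mono) auto
  then show ?thesis unfolding K_const_def by simp
qed

lemma block_est:
  assumes st: "a \<le> s" "s \<le> t" "t \<le> b"
    and xg: "pvar_semi p x s t \<le> 1 / (2 * (K_const p + 1) * Cg)"
  shows "pvar_semi p y s t \<le> 2 * (integral {s..t} (\<lambda>s. (onorm (\<lambda>v. A *v v) + Cf) * norm (y s) + norm (f 0))
           + (SUP u. onorm (\<lambda>w. g u *v w)) * pvar_semi p x s t)"
proof -
  define h where "h = (\<lambda>s. (onorm (\<lambda>v. A *v v) + Cf) * norm (y s) + norm (f 0))"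
  define gs where "gs = (SUP u. onorm (\<lambda>w. g u *v w))"
  define K where "K = K_const p"
  define \<gamma> where "\<gamma> = 1 / (2 * (K + 1) * Cg)"
  define c where "c = K * Cg * \<gamma>"
  have p0: "0 < p" and p1: "1 \<le> p" using p by auto
  have K0: "0 < K" unfolding K_def by (rule K_pos)
  have \<gamma>e: "\<gamma> * (2 * (K + 1) * Cg) = 1" unfolding \<gamma>_def using Cg(1) K0 by simp
  have "c * (2 * (K + 1)) = K * (\<gamma> * (2 * (K + 1) * Cg))" unfolding c_def by (simp add: algebra_simps)
  then have "c * (2 * (K + 1)) = K * 1" unfolding \<gamma>e .
  then have "c * (2 * (K + 1)) = K" by simp
  then have ce: "c = K / (2 * (K + 1))" using K0 by (simp add: eq_divide_eq)
  have c0: "0 \<le> c" "c \<le> 1/2" unfolding ce using K0 by (auto simp: field_simps)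
  have gs0: "0 \<le> gs" unfolding gs_def by (rule gs_facts(1))
  have fy: "finite_pvar p y s t" and fx: "finite_pvar p x s t"
    using finite_pvar_sub[OF y_pvar] finite_pvar_sub[OF x_pvar] st by auto
  have finy: "\<And>u v. a \<le> u \<Longrightarrow> v \<le> b \<Longrightarrow> finite_pvar p y u v" using finite_pvar_sub[OF y_pvar] by blast
  have finx: "\<And>u v. a \<le> u \<Longrightarrow> v \<le> b \<Longrightarrow> finite_pvar p x u v" using finite_pvar_sub[OF x_pvar] by blast
  define H where "H = integral {s..t} h"
  define X where "X = pvar_semi p x s t"
  define Y where "Y = pvar_semi p y s t"
  have hc: "continuous_on {s..t} h" unfolding h_def using continuous_on_subset[OF h_cont] st by auto
  have H0: "0 \<le> H" unfolding H_def by (rule integral_nonneg[OF integrable_continuous_interval[OF hc]]) (simp add: h_def h_nonneg)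
  have oy0: "0 \<le> om p y s t" by (rule om_nonneg[OF fy st(2)])
  have ox0: "0 \<le> om p x s t" by (rule om_nonneg[OF fx st(2)])
  have X0: "0 \<le> X" "X \<le> \<gamma>" unfolding X_def \<gamma>_def K_def using xg by (auto simp: pvar_semi_om)
  have Y0: "0 \<le> Y" unfolding Y_def by (simp add: pvar_semi_om)
  have XX: "X powr p = om p x s t" unfolding X_def pvar_semi_om using ox0 p0 by (simp add: powr_powr)
  have YY: "Y powr p = om p y s t" unfolding Y_def pvar_semi_om using oy0 p0 by (simp add: powr_powr)
  have main: "om p y s t \<le> (H + gs * X + c * Y) powr p"
  proof (rule om_least[OF st(2)])
    fix n \<tau> assume P: "partition_of s t n \<tau>"
    have rng: "s \<le> \<tau> i" "\<tau> i \<le> \<tau> (Suc i)" "\<tau> (Suc i) \<le> t" if "i < n" for i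
      using part_range[OF P] part_mono[OF P, of i "Suc i"] that by auto
    define \<alpha> where "\<alpha> = (\<lambda>i. integral {\<tau> i..\<tau> (Suc i)} h)"
    define \<beta> where "\<beta> = (\<lambda>i. gs * norm (x (\<tau> (Suc i)) - x (\<tau> i)))"
    define \<zeta> where "\<zeta> = (\<lambda>i. c * om p y (\<tau> i) (\<tau> (Suc i)) powr (1/p))"
    have \<alpha>0: "0 \<le> \<alpha> i" if "i < n" for i
    proof -
      have "continuous_on {\<tau> i..\<tau> (Suc i)} h" using continuous_on_subset[OF hc] rng[OF that] by auto
      then show ?thesis unfolding \<alpha>_def
        by (intro integral_nonneg integrable_continuous_interval) (auto simp: h_def h_nonneg)
    qed
    have \<beta>0: "0 \<le> \<beta> i" for i unfolding \<beta>_def using gs0 by simp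
    have \<zeta>0: "0 \<le> \<zeta> i" for i unfolding \<zeta>_def using c0 by simp
    have inc: "norm (y (\<tau> (Suc i)) - y (\<tau> i)) \<le> \<alpha> i + \<beta> i + \<zeta> i" if i: "i < n" for i
    proof -
      note r = rng[OF i]
      have "norm (y (\<tau> (Suc i)) - y (\<tau> i)) \<le> \<alpha> i + \<beta> i
          + K * Cg * om p y (\<tau> i) (\<tau> (Suc i)) powr (1/p) * om p x (\<tau> i) (\<tau> (Suc i)) powr (1/p)"
        unfolding \<alpha>_def \<beta>_def h_def gs_def K_def by (rule young_incr_y) (use r st in auto)
      also have "K * Cg * om p y (\<tau> i) (\<tau> (Suc i)) powr (1/p) * om p x (\<tau> i) (\<tau> (Suc i)) powr (1/p)
          \<le> K * Cg * om p y (\<tau> i) (\<tau> (Suc i)) powr (1/p) * \<gamma>"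
      proof (rule mult_left_mono)
        have "om p x (\<tau> i) (\<tau> (Suc i)) \<le> om p x s t" by (rule om_mono[OF fx]) (use r in auto)
        moreover have "0 \<le> om p x (\<tau> i) (\<tau> (Suc i))" by (rule om_nonneg[OF finx]) (use r st in auto)
        ultimately have "om p x (\<tau> i) (\<tau> (Suc i)) powr (1/p) \<le> om p x s t powr (1/p)"
          using p0 by (intro powr_mono2) auto
        then show "om p x (\<tau> i) (\<tau> (Suc i)) powr (1/p) \<le> \<gamma>" using X0 unfolding X_def pvar_semi_om by simp
        show "0 \<le> K * Cg * om p y (\<tau> i) (\<tau> (Suc i)) powr (1/p)" using K0 Cg by simp
      qed
      also have "K * Cg * om p y (\<tau> i) (\<tau> (Suc i)) powr (1/p) * \<gamma> = \<zeta> i" unfolding \<zeta>_def c_def by simp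
      finally show ?thesis by simp
    qed
    have "pvar_sum p y n \<tau> \<le> (\<Sum>i<n. (\<alpha> i + \<beta> i + \<zeta> i) powr p)"
      unfolding pvar_sum_def using inc p0 by (intro sum_mono powr_mono2) auto
    then have "pvar_sum p y n \<tau> powr (1/p) \<le> (\<Sum>i<n. ((\<alpha> i + \<beta> i) + \<zeta> i) powr p) powr (1/p)"
      using p0 pvar_sum_nonneg by (intro powr_mono2) auto
    also have "\<dots> \<le> (\<Sum>i<n. (\<alpha> i + \<beta> i) powr p) powr (1/p) + (\<Sum>i<n. \<zeta> i powr p) powr (1/p)"
      by (rule minkowski[OF p1]) (use \<alpha>0 \<beta>0 \<zeta>0 in auto)
    also have "(\<Sum>i<n. (\<alpha> i + \<beta> i) powr p) powr (1/p) \<le> (\<Sum>i<n. \<alpha> i powr p) powr (1/p) + (\<Sum>i<n. \<beta> i powr p) powr (1/p)"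
      by (rule minkowski[OF p1]) (use \<alpha>0 \<beta>0 in auto)
    also have "(\<Sum>i<n. \<alpha> i powr p) powr (1/p) \<le> H"
    proof -
      have "(\<Sum>i<n. \<alpha> i powr p) \<le> (\<Sum>i<n. \<alpha> i) powr p" by (rule sum_powr_le_powr_sum[OF p1]) (use \<alpha>0 in auto)
      moreover have "(\<Sum>i<n. \<alpha> i) = H" unfolding \<alpha>_def H_def h_def by (rule int_h_sum[OF P]) (use st in auto)
      ultimately have "(\<Sum>i<n. \<alpha> i powr p) powr (1/p) \<le> (H powr p) powr (1/p)"
        using p0 by (intro powr_mono2) (auto intro: sum_nonneg)
      then show ?thesis using H0 p0 by (simp add: powr_powr)
    qed
    also have "(\<Sum>i<n. \<beta> i powr p) powr (1/p) \<le> gs * X"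
    proof -
      have "(\<Sum>i<n. \<beta> i powr p) = gs powr p * pvar_sum p x n \<tau>"
        unfolding \<beta>_def pvar_sum_def using gs0 by (simp add: powr_mult sum_distrib_left)
      also have "\<dots> \<le> gs powr p * om p x s t" by (intro mult_left_mono om_upper[OF fx P]) simp
      also have "\<dots> = (gs * X) powr p" using gs0 X0 XX by (simp add: powr_mult)
      finally have "(\<Sum>i<n. \<beta> i powr p) powr (1/p) \<le> ((gs * X) powr p) powr (1/p)"
        using p0 by (intro powr_mono2) (auto intro: sum_nonneg)
      then show ?thesis using gs0 X0 p0 by (simp add: powr_powr)
    qed
    also have "(\<Sum>i<n. \<zeta> i powr p) powr (1/p) \<le> c * Y"
    proof -
      have z: "\<zeta> i powr p = c powr p * om p y (\<tau> i) (\<tau> (Suc i))" if "i < n" for i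
      proof -
        have "0 \<le> om p y (\<tau> i) (\<tau> (Suc i))" by (rule om_nonneg[OF finy]) (use rng[OF that] st in auto)
        then show ?thesis unfolding \<zeta>_def using c0 p0 by (simp add: powr_mult powr_powr)
      qed
      have "(\<Sum>i<n. \<zeta> i powr p) = c powr p * psum (om p y) n \<tau>"
        using z by (simp add: psum_def sum_distrib_left)
      also have "\<dots> \<le> c powr p * om p y s t"
      proof (intro mult_left_mono ctrl_psum[OF P])
        fix u v w assume "s \<le> u" "u \<le> v" "v \<le> w" "w \<le> t"
        then show "om p y u v + om p y v w \<le> om p y u w" using om_superadd[OF finy] st by auto
      next
        fix u v assume "s \<le> u" "u \<le> v" "v \<le> t"
        then show "0 \<le> om p y u v" using om_nonneg[OF finy] st by auto
      qed simp
      also have "\<dots> = (c * Y) powr p" using c0 Y0 YY by (simp add: powr_mult)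
      finally have "(\<Sum>i<n. \<zeta> i powr p) powr (1/p) \<le> ((c * Y) powr p) powr (1/p)"
        using p0 by (intro powr_mono2) (auto intro: sum_nonneg)
      then show ?thesis using c0 Y0 p0 by (simp add: powr_powr)
    qed
    finally have "pvar_sum p y n \<tau> powr (1/p) \<le> H + gs * X + c * Y" by simp
    then have "(pvar_sum p y n \<tau> powr (1/p)) powr p \<le> (H + gs * X + c * Y) powr p"
      using p0 by (intro powr_mono2) auto
    then show "pvar_sum p y n \<tau> \<le> (H + gs * X + c * Y) powr p"
      using pvar_sum_nonneg p0 by (simp add: powr_powr)
  qed
  have HXY: "0 \<le> H + gs * X + c * Y" using H0 gs0 X0 Y0 c0 by simp
  have "om p y s t powr (1/p) \<le> ((H + gs * X + c * Y) powr p) powr (1/p)"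
    using main oy0 p0 by (intro powr_mono2) auto
  moreover have "Y = om p y s t powr (1/p)" unfolding Y_def pvar_semi_om ..
  ultimately have "Y \<le> ((H + gs * X + c * Y) powr p) powr (1/p)" by simp
  then have "Y \<le> H + gs * X + c * Y" using HXY p0 by (simp add: powr_powr)
  then have "(1 - c) * Y \<le> H + gs * X" by (simp add: algebra_simps)
  moreover have "1/2 * Y \<le> (1 - c) * Y" using c0 Y0 by (intro mult_right_mono) auto
  ultimately have "Y \<le> 2 * (H + gs * X)" by simp
  then show ?thesis unfolding Y_def H_def X_def h_def gs_def .
qed


lemma chain:
  defines "\<gamma> \<equiv> 1 / (2 * (K_const p + 1) * Cg)"
  shows "a \<le> t \<Longrightarrow> t \<le> greedy_tau p x a b \<gamma> k \<Longrightarrow>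
    pvar_semi p y a t \<le> 2 * integral {a..t} (\<lambda>s. (onorm (\<lambda>v. A *v v) + Cf) * norm (y s) + norm (f 0))
      + 2 * (SUP u. onorm (\<lambda>w. g u *v w)) * real k * pvar_semi p x a b"
proof (induction k arbitrary: t)
  define h where "h = (\<lambda>s. (onorm (\<lambda>v. A *v v) + Cf) * norm (y s) + norm (f 0))"
  define gs where "gs = (SUP u. onorm (\<lambda>w. g u *v w))"
  case 0
  then have "t = a" by simp
  then show ?case by (simp add: pvar_semi_refl)
next
  case (Suc k)
  define h where "h = (\<lambda>s. (onorm (\<lambda>v. A *v v) + Cf) * norm (y s) + norm (f 0))"
  define gs where "gs = (SUP u. onorm (\<lambda>w. g u *v w))"
  define \<tau> where "\<tau> = greedy_tau p x a b \<gamma>"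
  define X where "X = pvar_semi p x a b"
  have p1: "1 \<le> p" and p0: "0 < p" using p by auto
  have \<gamma>0: "0 < \<gamma>" unfolding \<gamma>_def using K_pos Cg by simp
  note G = greedy_props[OF x_cont x_pvar p1 ab \<gamma>0]
  have gs0: "0 \<le> gs" unfolding gs_def by (rule gs_facts(1))
  have X0: "0 \<le> X" unfolding X_def by (simp add: pvar_semi_om)
  have rk: "a \<le> \<tau> k" "\<tau> k \<le> \<tau> (Suc k)" "\<tau> (Suc k) \<le> b" using G(1)[of k] G(1)[of "Suc k"] G(2)[of k]
    unfolding \<tau>_def by auto
  have t: "a \<le> t" "t \<le> \<tau> (Suc k)" using Suc.prems unfolding \<tau>_def by auto
  show ?case
  proof (cases "t \<le> \<tau> k")
    case True
    have "pvar_semi p y a t \<le> 2 * integral {a..t} h + 2 * gs * real k * X"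
      using Suc.IH[of t] t True unfolding \<tau>_def h_def gs_def X_def by simp
    also have "\<dots> \<le> 2 * integral {a..t} h + 2 * gs * real (Suc k) * X"
      using gs0 X0 by (simp add: mult_right_mono mult_left_mono)
    finally show ?thesis unfolding h_def gs_def X_def .
  next
    case False
    then have tk: "\<tau> k < t" by simp
    have IHk: "pvar_semi p y a (\<tau> k) \<le> 2 * integral {a..\<tau> k} h + 2 * gs * real k * X"
      using Suc.IH[of "\<tau> k"] rk unfolding \<tau>_def h_def gs_def X_def by simp
    have tri: "pvar_semi p y a t \<le> pvar_semi p y a (\<tau> k) + pvar_semi p y (\<tau> k) t"
      unfolding pvar_semi_om by (rule om_triangle[OF p1 finite_pvar_sub[OF y_pvar]]) (use rk t tk in auto)
    have xk: "pvar_semi p x (\<tau> k) t \<le> pvar_semi p x (\<tau> k) (\<tau> (Suc k))"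
      by (rule pvar_semi_mono[OF x_pvar p0]) (use rk t tk in auto)
    have xg: "pvar_semi p x (\<tau> k) (\<tau> (Suc k)) \<le> \<gamma>" using G(3)[of k] unfolding \<tau>_def .
    have blk: "pvar_semi p y (\<tau> k) t \<le> 2 * (integral {\<tau> k..t} h + gs * pvar_semi p x (\<tau> k) t)"
      unfolding h_def gs_def by (rule block_est) (use rk t tk xk xg in \<open>auto simp: \<gamma>_def\<close>)
    have xX: "pvar_semi p x (\<tau> k) t \<le> X"
    proof -
      have "om p x (\<tau> k) t \<le> om p x a b" by (rule om_mono[OF x_pvar]) (use rk t tk in auto)
      moreover have "0 \<le> om p x (\<tau> k) t" by (rule om_nonneg[OF finite_pvar_sub[OF x_pvar]]) (use rk t tk in auto)
      ultimately show ?thesis unfolding X_def pvar_semi_om using p0 by (intro powr_mono2) auto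
    qed
    have int: "h integrable_on {a..t}"
      unfolding h_def by (rule integrable_continuous_interval[OF continuous_on_subset[OF h_cont]]) (use rk t in auto)
    have comb: "integral {a..\<tau> k} h + integral {\<tau> k..t} h = integral {a..t} h"
      by (rule Henstock_Kurzweil_Integration.integral_combine[OF rk(1) _ int]) (use tk in auto)
    have "pvar_semi p y a t \<le> 2 * integral {a..\<tau> k} h + 2 * gs * real k * X
        + 2 * (integral {\<tau> k..t} h + gs * pvar_semi p x (\<tau> k) t)"
      using tri IHk blk by simp
    also have "\<dots> \<le> 2 * integral {a..\<tau> k} h + 2 * gs * real k * X + 2 * (integral {\<tau> k..t} h + gs * X)"
      using xX gs0 by (simp add: mult_left_mono)
    also have "\<dots> = 2 * integral {a..t} h + 2 * gs * real (Suc k) * X"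
      using comb by (simp add: algebra_simps)
    finally show ?thesis unfolding h_def gs_def X_def .
  qed
qed

lemma final_bound:
  shows "let L = onorm (\<lambda>v. A *v v) + Cf;
             gsup = (SUP u. onorm (\<lambda>w. g u *v w));
             \<gamma> = 1 / (2 * (K_const p + 1) * Cg);
             N = real (greedy_N p x a b \<gamma>)
         in pvar_norm p y a b
            \<le> (norm (y a) + max (norm (f 0) / L) (2 * gsup) * (1 + pvar_semi p x a b) * N)
              * exp (2 * L * (b - a)) * N powr ((p - 1) / p)"
proof -
  define L where "L = onorm (\<lambda>v. A *v v) + Cf"
  define gs where "gs = (SUP u. onorm (\<lambda>w. g u *v w))"
  define \<gamma> where "\<gamma> = 1 / (2 * (K_const p + 1) * Cg)"
  define N where "N = real (greedy_N p x a b \<gamma>)"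
  define X where "X = pvar_semi p x a b"
  define c where "c = norm (f 0)"
  define h where "h = (\<lambda>s. L * norm (y s) + c)"
  have p1: "1 \<le> p" and p0: "0 < p" using p by auto
  have \<gamma>0: "0 < \<gamma>" unfolding \<gamma>_def using K_pos Cg by simp
  note G = greedy_props[OF x_cont x_pvar p1 ab \<gamma>0]
  have N1: "1 \<le> N" unfolding N_def using G(4) by simp
  have tN: "greedy_tau p x a b \<gamma> (greedy_N p x a b \<gamma>) = b" using G(4) by simp
  have L0: "0 < L" unfolding L_def using Cf onorm_pos_le[of "\<lambda>v. A *v v"] by simp
  have gs0: "0 \<le> gs" unfolding gs_def by (rule gs_facts(1))
  have X0: "0 \<le> X" unfolding X_def by (simp add: pvar_semi_om)
  have c0: "0 \<le> c" unfolding c_def by simp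
  have ch: "pvar_semi p y a t \<le> 2 * integral {a..t} h + 2 * gs * N * X" if t: "a \<le> t" "t \<le> b" for t
    using chain[of t "greedy_N p x a b \<gamma>"] t tN unfolding h_def L_def c_def gs_def N_def X_def \<gamma>_def by simp
  define \<Phi> where "\<Phi> = norm (y a) + 2 * gs * N * X"
  have uc: "continuous_on {a..b} (\<lambda>s. norm (y s))" by (intro continuous_intros y_cont)
  have le: "norm (y t) \<le> \<Phi> + 2 * integral {a..t} (\<lambda>s. L * norm (y s) + c)" if t: "t \<in> {a..b}" for t
  proof -
    have "norm (y t - y a) \<le> om p y a t powr (1/p)"
      by (rule incr_le_om[OF finite_pvar_sub[OF y_pvar] _ p0]) (use t in auto)
    then have "norm (y t - y a) \<le> pvar_semi p y a t" by (simp add: pvar_semi_om)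
    moreover have "norm (y t) \<le> norm (y a) + norm (y t - y a)"
      using norm_triangle_ineq[of "y a" "y t - y a"] by simp
    ultimately show ?thesis using ch[of t] t unfolding \<Phi>_def h_def by auto
  qed
  have gw: "\<Phi> + 2 * integral {a..b} (\<lambda>s. L * norm (y s) + c) + c / L \<le> (\<Phi> + c / L) * exp (2 * L * (b - a))"
    by (rule gronwall[OF ab L0 c0 uc le])
  have "pvar_norm p y a b = norm (y a) + pvar_semi p y a b" by (simp add: pvar_norm_def)
  also have "\<dots> \<le> norm (y a) + 2 * integral {a..b} h + 2 * gs * N * X" using ch[of b] ab by simp
  also have "\<dots> = \<Phi> + 2 * integral {a..b} (\<lambda>s. L * norm (y s) + c)" unfolding \<Phi>_def h_def by simp
  also have "\<dots> \<le> (\<Phi> + c / L) * exp (2 * L * (b - a))" using gw c0 L0 by (smt (verit) divide_nonneg_pos)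
  also have "\<dots> \<le> (norm (y a) + max (c / L) (2 * gs) * (1 + X) * N) * exp (2 * L * (b - a))"
  proof (rule mult_right_mono)
    define M where "M = max (c / L) (2 * gs)"
    have M: "c / L \<le> M" "2 * gs \<le> M" unfolding M_def by auto
    have "c / L \<le> M * N" using M N1 c0 L0 by (smt (verit) divide_nonneg_pos mult_left_mono mult_cancel_left1)
    moreover have "2 * gs * N * X \<le> M * N * X" using M N1 X0 by (intro mult_right_mono) auto
    ultimately have "\<Phi> + c / L \<le> norm (y a) + M * (1 + X) * N" unfolding \<Phi>_def by (simp add: algebra_simps)
    then show "\<Phi> + c / L \<le> norm (y a) + max (c / L) (2 * gs) * (1 + X) * N" unfolding M_def .
  qed simp
  also have "\<dots> \<le> (norm (y a) + max (c / L) (2 * gs) * (1 + X) * N) * exp (2 * L * (b - a)) * N powr ((p - 1) / p)"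
  proof -
    have "1 \<le> N powr ((p - 1) / p)" using N1 p by (intro ge_one_powr_ge_zero) auto
    moreover have "0 \<le> (norm (y a) + max (c / L) (2 * gs) * (1 + X) * N) * exp (2 * L * (b - a))"
      using gs0 X0 N1 c0 L0 by (intro mult_nonneg_nonneg add_nonneg_nonneg) auto
    ultimately show ?thesis by (metis mult_left_mono mult.right_neutral)
  qed
  finally show ?thesis unfolding Let_def L_def gs_def \<gamma>_def N_def X_def c_def .
qed

end



theorem corollary2p4:
  fixes p a b Cf Cg :: real
    and A :: "real^'d^'d"
    and f :: "real^'d \<Rightarrow> real^'d"
    and g :: "real^'d \<Rightarrow> real^'m^'d"
    and x :: "real \<Rightarrow> real^'m"
    and y :: "real \<Rightarrow> real^'d"
  assumes p: "1 < p" "p < 2"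
    and ab: "a \<le> b"
    and Cf: "Cf > 0" "\<And>u v. norm (f u - f v) \<le> Cf * norm (u - v)"
    and Cg: "Cg > 0" "\<And>u v. onorm (\<lambda>w. (g u - g v) *v w) \<le> Cg * norm (u - v)"
    and Dg: "\<exists>Dg. (\<forall>u. (g has_derivative Dg u) (at u))
               \<and> (\<exists>C. \<forall>u v. onorm (\<lambda>w. Dg u w - Dg v w) \<le> C * norm (u - v))"
    and g_bdd: "bdd_above (range (\<lambda>u. onorm (\<lambda>w. g u *v w)))"
    and x_cont: "continuous_on {a..b} x" and x_pvar: "finite_pvar p x a b"
    and y_cont: "continuous_on {a..b} y" and y_pvar: "finite_pvar p y a b"
    and y_sol: "\<forall>t\<in>{a..b}. \<exists>I. has_young_integral (\<lambda>s. g (y s)) x a t I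
                  \<and> y t = y a + integral {a..t} (\<lambda>s. A *v y s + f (y s)) + I"
  shows "let L = onorm (\<lambda>v. A *v v) + Cf;
             gsup = (SUP u. onorm (\<lambda>w. g u *v w));
             \<gamma> = 1 / (2 * (K_const p + 1) * Cg);
             N = real (greedy_N p x a b \<gamma>)
         in pvar_norm p y a b
            \<le> (norm (y a) + max (norm (f 0) / L) (2 * gsup) * (1 + pvar_semi p x a b) * N)
              * exp (2 * L * (b - a)) * N powr ((p - 1) / p)"
    by (rule final_bound[OF p ab Cf Cg g_bdd x_cont x_pvar y_cont y_pvar y_sol])

end
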